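(* For all sufficiently large integers $m$, there exists a $256$-regular bipartite graph $H$ with bipartition $(A,B)$, $|A|=|B|=7m$, together with sets $A'\subseteq A$, $B'\subseteq B$ with $|A'|=|B'|=2m$, such that for all $X\subseteq A'$ and $Y\subseteq B'$ with $|X|=|Y|\le m$, the graph $H-(X\cup Y)$ has a perfect matching. *)

theory Defs
  imports Main
begin

definition bip_graph :: "'a set \<Rightarrow> 'a set \<Rightarrow> ('a \<times> 'a) set \<Rightarrow> bool" where
  "bip_graph A B E \<longleftrightarrow> A \<inter> B = {} \<and> finite A \<and> finite B \<and> E \<subseteq> A \<times> B"

definition bip_regular :: "nat \<Rightarrow> 'a set \<Rightarrow> 'a set \<Rightarrow> ('a \<times> 'a) set \<Rightarrow> bool" where
  "bip_regular d A B E \<longleftrightarrow>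
     (\<forall>a\<in>A. card {b\<in>B. (a, b) \<in> E} = d) \<and> (\<forall>b\<in>B. card {a\<in>A. (a, b) \<in> E} = d)"

text \<open>The subgraph induced on A' \<union> B' (i.e. H minus the other vertices) has a perfect
  matching: a set of edges of H between A' and B' covering every vertex of A' and of B'
  exactly once.\<close>
definition bip_has_perfect_matching :: "'a set \<Rightarrow> 'a set \<Rightarrow> ('a \<times> 'a) set \<Rightarrow> bool" where
  "bip_has_perfect_matching A' B' E \<longleftrightarrow>
     (\<exists>M. M \<subseteq> E \<inter> (A' \<times> B') \<and>
          (\<forall>a\<in>A'. \<exists>!b. (a, b) \<in> M) \<and> (\<forall>b\<in>B'. \<exists>!a. (a, b) \<in> M))"

end

theory Submission imports Defs Complex_Main begin


fun ff :: "nat \<Rightarrow> nat \<Rightarrow> nat" where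
  "ff x 0 = 1"
| "ff x (Suc k) = x * ff (x - 1) k"

lemma ff_Suc': "ff x (Suc k) = ff x k * (x - k)"
proof (induction k arbitrary: x)
  case 0 then show ?case by simp
next
  case (Suc k)
  have "ff x (Suc (Suc k)) = x * ff (x - 1) (Suc k)" by simp
  also have "\<dots> = x * (ff (x - 1) k * (x - 1 - k))" by (simp only: Suc.IH)
  also have "\<dots> = ff x (Suc k) * (x - Suc k)" by (simp only: ff.simps mult.assoc diff_Suc_eq_diff_pred)
  finally show ?case .
qed

lemma ff_zero: "x < k \<Longrightarrow> ff x k = 0"
proof (induction k arbitrary: x)
  case 0 then show ?case by simp
next
  case (Suc k)
  show ?case
  proof (cases x)
    case 0 then show ?thesis by simp
  next
    case (Suc y) then show ?thesis using Suc.IH[of y] Suc.prems by simp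
  qed
qed

lemma ff_split: "s \<le> u \<Longrightarrow> ff v u = ff v s * ff (v - s) (u - s)"
proof (induction s arbitrary: v u)
  case 0 then show ?case by simp
next
  case (Suc s)
  then obtain u' where u: "u = Suc u'" by (cases u) auto
  have "ff v u = v * ff (v - 1) u'" by (simp add: u)
  also have "\<dots> = v * (ff (v - 1) s * ff (v - 1 - s) (u' - s))"
    using Suc.IH[of u' "v - 1"] Suc.prems u by simp
  also have "\<dots> = ff v (Suc s) * ff (v - Suc s) (u - Suc s)"
    by (simp add: u)
  finally show ?case .
qed

lemma ff_le_pow: "ff x k \<le> x ^ k"
proof (induction k arbitrary: x)
  case 0 then show ?case by simp
next
  case (Suc k)
  have "ff (x - 1) k \<le> x ^ k"
    using Suc[of "x - 1"] power_mono[of "x - 1" x k] by linarith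
  then show ?case by (simp add: mult_le_mono2)
qed

lemma ff_pos: "k \<le> x \<Longrightarrow> ff x k > 0"
  by (induction k arbitrary: x) auto

lemma ff_ratio: "w \<le> v \<Longrightarrow> ff w s * v ^ s \<le> ff v s * w ^ s"
proof (induction s)
  case 0 then show ?case by simp
next
  case (Suc s)
  have "ff w (Suc s) * v ^ Suc s = (ff w s * v ^ s) * ((w - s) * v)"
    by (simp only: ff_Suc' power_Suc mult_ac)
  also have "\<dots> \<le> (ff v s * w ^ s) * ((v - s) * w)"
  proof (rule mult_le_mono)
    show "ff w s * v ^ s \<le> ff v s * w ^ s" using Suc by simp
    have a: "(w - s) * v = w * v - s * v" by (simp add: diff_mult_distrib)
    have b: "(v - s) * w = w * v - s * w" by (metis diff_mult_distrib mult.commute)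
    have "s * w \<le> s * v" using Suc.prems by simp
    then show "(w - s) * v \<le> (v - s) * w" unfolding a b by (simp add: diff_le_mono2)
  qed
  also have "\<dots> = ff v (Suc s) * w ^ Suc s"
    by (simp only: ff_Suc' power_Suc mult_ac)
  finally show ?case .
qed




definition Lst :: "nat \<Rightarrow> nat set \<Rightarrow> nat set \<Rightarrow> nat set \<Rightarrow> nat list set" where
  "Lst u V S W = {xs. length xs = u \<and> distinct xs \<and> set xs \<subseteq> V \<and> (\<forall>i\<in>S. xs ! i \<in> W)}"

lemma finite_Lst: assumes "finite V" shows "finite (Lst u V S W)"
proof (rule finite_subset)
  show "Lst u V S W \<subseteq> {xs. set xs \<subseteq> V \<and> length xs = u}" by (auto simp: Lst_def)
  show "finite {xs. set xs \<subseteq> V \<and> length xs = u}" using finite_lists_length_eq[OF assms] .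
qed

lemma card_Lst:
  assumes "finite V" "W \<subseteq> V" "S \<subseteq> {..<u}"
  shows "card (Lst u V S W) = ff (card W) (card S) * ff (card V - card S) (u - card S)"
  using assms
proof (induction u arbitrary: S V W)
  case 0
  then have "S = {}" by auto
  moreover have "Lst 0 V {} W = {[]}" by (auto simp: Lst_def)
  ultimately show ?case by simp
next
  case (Suc u)
  define S' where "S' = {i. Suc i \<in> S}"
  have S'u: "S' \<subseteq> {..<u}" using Suc.prems(3) by (auto simp: S'_def)
  have finS': "finite S'" using S'u finite_subset by blast
  have Seq: "S = Suc ` S' \<union> (if 0 \<in> S then {0} else {})"
  proof (rule set_eqI)
    fix i show "i \<in> S \<longleftrightarrow> i \<in> Suc ` S' \<union> (if 0 \<in> S then {0} else {})"
      by (cases i) (auto simp: S'_def)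
  qed
  have cS: "card S = card S' + (if 0 \<in> S then 1 else 0)"
    by (subst Seq) (auto simp: card_image finS')
  have su: "card S' \<le> u" using card_mono[OF _ S'u] by simp
  define X where "X = (if 0 \<in> S then W else V)"
  have XV: "X \<subseteq> V" using Suc.prems by (auto simp: X_def)
  have eq: "Lst (Suc u) V S W = (\<lambda>(x, xs). x # xs) ` (SIGMA x:X. Lst u (V - {x}) S' (W - {x}))"
  proof (rule set_eqI, rule iffI)
    fix ys assume "ys \<in> Lst (Suc u) V S W"
    then obtain x xs where ys: "ys = x # xs" and l: "length xs = u" and d: "distinct (x # xs)"
      and s: "set (x # xs) \<subseteq> V" and w: "\<forall>i\<in>S. (x # xs) ! i \<in> W"
      unfolding Lst_def by (cases ys) auto
    have "x \<in> X" using s w by (auto simp: X_def)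
    moreover have "xs \<in> Lst u (V - {x}) S' (W - {x})"
      unfolding Lst_def
    proof (intro CollectI conjI ballI)
      show "length xs = u" "distinct xs" "set xs \<subseteq> V - {x}" using l d s by auto
      fix i assume i: "i \<in> S'"
      then have "i < u" using S'u by auto
      then have "xs ! i \<in> set xs" using l by simp
      then have "xs ! i \<noteq> x" using d by auto
      moreover have "xs ! i \<in> W" using w i by (auto simp: S'_def)
      ultimately show "xs ! i \<in> W - {x}" by simp
    qed
    ultimately show "ys \<in> (\<lambda>(x, xs). x # xs) ` (SIGMA x:X. Lst u (V - {x}) S' (W - {x}))"
      using ys by auto
  next
    fix ys assume "ys \<in> (\<lambda>(x, xs). x # xs) ` (SIGMA x:X. Lst u (V - {x}) S' (W - {x}))"
    then obtain x xs where ys: "ys = x # xs" and x: "x \<in> X" and xs: "xs \<in> Lst u (V - {x}) S' (W - {x})"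
      by auto
    show "ys \<in> Lst (Suc u) V S W"
      unfolding Lst_def
    proof (intro CollectI conjI ballI)
      show "length ys = Suc u" "distinct ys" "set ys \<subseteq> V" using xs x XV ys by (auto simp: Lst_def)
      fix i assume i: "i \<in> S"
      show "ys ! i \<in> W"
      proof (cases i)
        case 0 then show ?thesis using x i ys by (auto simp: X_def)
      next
        case (Suc j) then have "j \<in> S'" using i by (simp add: S'_def)
        then show ?thesis using xs ys Suc by (auto simp: Lst_def)
      qed
    qed
  qed
  have inj: "inj_on (\<lambda>(x, xs). x # xs) A" for A :: "(nat \<times> nat list) set"
    by (rule inj_onI) auto
  have finX: "finite X" using XV Suc.prems(1) finite_subset by blast
  have "card (Lst (Suc u) V S W) = (\<Sum>x\<in>X. card (Lst u (V - {x}) S' (W - {x})))"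
    unfolding eq using finX Suc.prems(1) by (simp add: card_image[OF inj] finite_Lst)
  also have "\<dots> = (\<Sum>x\<in>X. ff (card (W - {x})) (card S') * ff (card V - 1 - card S') (u - card S'))"
  proof (rule sum.cong[OF refl])
    fix x assume "x \<in> X"
    then have xV: "x \<in> V" using XV by auto
    have "card (Lst u (V - {x}) S' (W - {x})) = ff (card (W - {x})) (card S') * ff (card (V - {x}) - card S') (u - card S')"
      using Suc.IH[of "V - {x}" "W - {x}" S'] Suc.prems S'u by auto
    then show "card (Lst u (V - {x}) S' (W - {x})) = ff (card (W - {x})) (card S') * ff (card V - 1 - card S') (u - card S')"
      using xV Suc.prems(1) by simp
  qed
  finally have c: "card (Lst (Suc u) V S W) = (\<Sum>x\<in>X. ff (card (W - {x})) (card S') * ff (card V - 1 - card S') (u - card S'))" .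
  define w where "w = card W"
  define v where "v = card V"
  define s where "s = card S'"
  define R where "R = ff (v - 1 - s) (u - s)"
  have wv: "w \<le> v" using card_mono[OF Suc.prems(1,2)] by (simp add: w_def v_def)
  have finW: "finite W" using Suc.prems finite_subset by blast
  show ?case
  proof (cases "0 \<in> S")
    case True
    have "card (Lst (Suc u) V S W) = (\<Sum>x\<in>W. ff (w - 1) s * R)"
      unfolding c using True finW by (intro sum.cong) (auto simp: X_def w_def s_def R_def v_def)
    also have "\<dots> = w * ff (w - 1) s * R" by (simp add: w_def)
    also have "\<dots> = ff w (Suc s) * ff (v - Suc s) (Suc u - Suc s)"
      by (simp add: R_def)
    finally show ?thesis using True cS by (simp add: w_def v_def s_def)
  next
    case False
    have "card (Lst (Suc u) V S W) = (\<Sum>x\<in>V. ff (card (W - {x})) s * R)"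
      unfolding c using False by (simp add: X_def s_def R_def v_def)
    also have "\<dots> = (\<Sum>x\<in>W. ff (card (W - {x})) s * R) + (\<Sum>x\<in>V - W. ff (card (W - {x})) s * R)"
      using sum.subset_diff[OF Suc.prems(2,1), of "\<lambda>x. ff (card (W - {x})) s * R"] by (metis add.commute)
    also have "(\<Sum>x\<in>W. ff (card (W - {x})) s * R) = w * (ff (w - 1) s * R)"
      using finW by (simp add: w_def)
    also have "(\<Sum>x\<in>V - W. ff (card (W - {x})) s * R) = (v - w) * (ff w s * R)"
    proof -
      have "(\<Sum>x\<in>V - W. ff (card (W - {x})) s * R) = (\<Sum>x\<in>V - W. ff w s * R)"
        by (intro sum.cong) (auto simp: w_def)
      also have "\<dots> = (v - w) * (ff w s * R)"
        using card_Diff_subset[OF finW Suc.prems(2)] by (simp add: v_def w_def)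
      finally show ?thesis .
    qed
    also have "w * (ff (w - 1) s * R) + (v - w) * (ff w s * R) = ff w s * ((v - s) * R)"
    proof (cases "s \<le> w")
      case True
      have "w * ff (w - 1) s = ff w s * (w - s)" using ff_Suc'[of w s] by simp
      then have "w * (ff (w - 1) s * R) + (v - w) * (ff w s * R) = ff w s * R * ((w - s) + (v - w))"
        by (simp add: algebra_simps)
      also have "(w - s) + (v - w) = v - s" using True wv by simp
      finally show ?thesis by (simp add: algebra_simps)
    next
      case False
      then have "ff w s = 0" by (simp add: ff_zero)
      moreover have "w * ff (w - 1) s = 0" using ff_zero[of w "Suc s"] False by simp
      ultimately show ?thesis by (simp add: mult.assoc[symmetric])
    qed
    also have "(v - s) * R = ff (v - s) (Suc u - s)"
      using su by (simp add: R_def Suc_diff_le s_def)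
    finally show ?thesis using False cS by (simp add: w_def v_def s_def)
  qed
qed


lemma card_Lst_all: "finite V \<Longrightarrow> card (Lst u V {} V) = ff (card V) u"
  using card_Lst[of V V "{}" u] by simp

lemma exists_good_family:
  fixes Bad :: "(nat set \<times> nat set) set"
  assumes V: "finite V" and uv: "u \<le> card V" and finB: "finite Bad"
    and BadS: "\<And>S W. (S, W) \<in> Bad \<Longrightarrow> S \<subseteq> {..<u} \<and> W \<subseteq> V"
    and sum: "(\<Sum>p\<in>Bad. (real (ff (card (snd p)) (card (fst p))) / real (ff (card V) (card (fst p)))) ^ D) < 1"
  shows "\<exists>Fs. length Fs = D \<and> set Fs \<subseteq> Lst u V {} V \<and>
           (\<forall>p\<in>Bad. \<not> (\<forall>F\<in>set Fs. \<forall>i\<in>fst p. F ! i \<in> snd p))"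
proof -
  define L where "L = Lst u V {} V"
  define Fam where "Fam = {Fs. set Fs \<subseteq> L \<and> length Fs = D}"
  define BF where "BF p = {Fs. set Fs \<subseteq> Lst u V (fst p) (snd p) \<and> length Fs = D}" for p
  have finL: "finite L" using V by (simp add: L_def finite_Lst)
  have cFam: "card Fam = (ff (card V) u) ^ D"
    using card_lists_length_eq[OF finL, of D] card_Lst_all[OF V, of u] by (simp add: Fam_def L_def)
  have cBF: "real (card (BF p)) = (real (ff (card (snd p)) (card (fst p))) / real (ff (card V) (card (fst p)))) ^ D * real (ff (card V) u) ^ D"
    if p: "p \<in> Bad" for p
  proof -
    obtain S W where pSW: "p = (S, W)" by (cases p)
    have S: "S \<subseteq> {..<u}" and W: "W \<subseteq> V" using BadS p pSW by auto
    have su: "card S \<le> u" using card_mono[OF _ S] by simp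
    have finLS: "finite (Lst u V S W)" using V by (simp add: finite_Lst)
    have "card (BF p) = (card (Lst u V S W)) ^ D"
      using card_lists_length_eq[OF finLS, of D] by (simp add: BF_def pSW)
    also have "card (Lst u V S W) = ff (card W) (card S) * ff (card V - card S) (u - card S)"
      using card_Lst[OF V W S] .
    finally have c: "real (card (BF p)) = (real (ff (card W) (card S)) * real (ff (card V - card S) (u - card S))) ^ D"
      by simp
    have pos: "real (ff (card V) (card S)) > 0" using ff_pos[of "card S" "card V"] su uv by simp
    have split: "ff (card V) u = ff (card V) (card S) * ff (card V - card S) (u - card S)"
      using ff_split[OF su] .
    have "real (ff (card W) (card S)) * real (ff (card V - card S) (u - card S))
        = (real (ff (card W) (card S)) / real (ff (card V) (card S))) * real (ff (card V) u)"
      using pos by (simp add: split field_simps)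
    then have "real (card (BF p)) = ((real (ff (card W) (card S)) / real (ff (card V) (card S))) * real (ff (card V) u)) ^ D"
      unfolding c by simp
    then show ?thesis unfolding pSW fst_conv snd_conv by (simp only: power_mult_distrib)
  qed
  have "real (card (\<Union>p\<in>Bad. BF p)) \<le> real (\<Sum>p\<in>Bad. card (BF p))"
    using card_UN_le[OF finB, of BF] by linarith
  also have "\<dots> = (\<Sum>p\<in>Bad. real (card (BF p)))" by simp
  also have "\<dots> = (\<Sum>p\<in>Bad. (real (ff (card (snd p)) (card (fst p))) / real (ff (card V) (card (fst p)))) ^ D) * real (ff (card V) u) ^ D"
    using cBF by (simp add: sum_distrib_right)
  also have "\<dots> < real (ff (card V) u) ^ D"
  proof -
    have "real (ff (card V) u) ^ D > 0" using ff_pos[OF uv] by simp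
    then show ?thesis using sum by simp
  qed
  also have "\<dots> = real (card Fam)" using cFam by simp
  finally have "card (\<Union>p\<in>Bad. BF p) < card Fam" by linarith
  moreover have finU: "finite (\<Union>p\<in>Bad. BF p)"
  proof (rule finite_UN_I[OF finB])
    fix p show "finite (BF p)"
      unfolding BF_def using finite_lists_length_eq[OF finite_Lst[OF V, of u "fst p" "snd p"], of D] by (simp add: conj_commute)
  qed
  ultimately have "\<not> Fam \<subseteq> (\<Union>p\<in>Bad. BF p)"
    using card_mono[OF finU, of Fam] by linarith
  then obtain Fs where Fs: "Fs \<in> Fam" and nb: "\<And>p. p \<in> Bad \<Longrightarrow> Fs \<notin> BF p" by blast
  show ?thesis
  proof (intro exI conjI ballI)
    show "length Fs = D" "set Fs \<subseteq> Lst u V {} V" using Fs by (auto simp: Fam_def L_def)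
    fix p assume p: "p \<in> Bad"
    show "\<not> (\<forall>F\<in>set Fs. \<forall>i\<in>fst p. F ! i \<in> snd p)"
    proof
      assume all: "\<forall>F\<in>set Fs. \<forall>i\<in>fst p. F ! i \<in> snd p"
      have "set Fs \<subseteq> Lst u V (fst p) (snd p)"
        using Fs all by (auto simp: Fam_def L_def Lst_def)
      then have "Fs \<in> BF p" using Fs by (simp add: BF_def Fam_def)
      with nb p show False by blast
    qed
  qed
qed



lemma sum_Bad:
  fixes h :: "nat \<Rightarrow> nat \<Rightarrow> real"
  assumes U: "finite U" and V: "finite V"
  shows "(\<Sum>p\<in>{(S, W). S \<subseteq> U \<and> W \<subseteq> V \<and> card S \<in> R \<and> card W = g (card S)}. h (card (fst p)) (card (snd p)))
       = (\<Sum>s\<in>R \<inter> {..card U}. real (card U choose s) * real (card V choose g s) * h s (g s))"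
proof -
  define P where "P s = {S. S \<subseteq> U \<and> card S = s} \<times> {W. W \<subseteq> V \<and> card W = g s}" for s
  have eq: "{(S, W). S \<subseteq> U \<and> W \<subseteq> V \<and> card S \<in> R \<and> card W = g (card S)} = (\<Union>s\<in>R \<inter> {..card U}. P s)"
    by (auto simp: P_def card_mono[OF U])
  have finP: "finite (P s)" for s
  proof -
    have "finite {S. S \<subseteq> U \<and> card S = s}" by (rule finite_subset[of _ "Pow U"]) (auto simp: U)
    moreover have "finite {W. W \<subseteq> V \<and> card W = g s}" by (rule finite_subset[of _ "Pow V"]) (auto simp: V)
    ultimately show ?thesis unfolding P_def by simp
  qed
  have "(\<Sum>p\<in>(\<Union>s\<in>R \<inter> {..card U}. P s). h (card (fst p)) (card (snd p)))
      = (\<Sum>s\<in>R \<inter> {..card U}. \<Sum>p\<in>P s. h (card (fst p)) (card (snd p)))"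
  proof (rule sum.UNION_disjoint)
    show "finite (R \<inter> {..card U})" by simp
    show "\<forall>i\<in>R \<inter> {..card U}. finite (P i)" using finP by simp
    show "\<forall>i\<in>R \<inter> {..card U}. \<forall>j\<in>R \<inter> {..card U}. i \<noteq> j \<longrightarrow> P i \<inter> P j = {}"
      by (auto simp: P_def)
  qed
  also have "\<dots> = (\<Sum>s\<in>R \<inter> {..card U}. real (card U choose s) * real (card V choose g s) * h s (g s))"
  proof (rule sum.cong[OF refl])
    fix s
    have "(\<Sum>p\<in>P s. h (card (fst p)) (card (snd p))) = (\<Sum>p\<in>P s. h s (g s))"
      by (rule sum.cong) (auto simp: P_def)
    also have "\<dots> = real (card (P s)) * h s (g s)" by simp
    also have "card (P s) = (card U choose s) * (card V choose g s)"
      unfolding P_def card_cartesian_product n_subsets[OF U] n_subsets[OF V] ..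
    finally show "(\<Sum>p\<in>P s. h (card (fst p)) (card (snd p))) = real (card U choose s) * real (card V choose g s) * h s (g s)"
      by simp
  qed
  finally show ?thesis unfolding eq .
qed

lemma pow_le_fact: "real s ^ s \<le> 3 ^ s * fact s"
proof (induction s)
  case 0 then show ?case by simp
next
  case (Suc s)
  have key: "(real s + 1) ^ s \<le> 3 * real s ^ s"
  proof (cases "s = 0")
    case True then show ?thesis by simp
  next
    case False
    have h1: "(1::real) \<ge> - real s" by simp
    have h2: "s > 0" using False by simp
    have "(1 + 1 / real s) ^ s \<le> exp 1"
      using exp_ge_one_plus_x_over_n_power_n[OF h1 h2] by simp
    also have "\<dots> \<le> 3" by (rule exp_le)
    finally have a: "(1 + 1 / real s) ^ s \<le> 3" .
    have "(real s + 1) ^ s = (1 + 1 / real s) ^ s * real s ^ s"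
      using False by (simp add: power_mult_distrib[symmetric] field_simps)
    also have "\<dots> \<le> 3 * real s ^ s"
      using a by (simp add: mult_right_mono)
    finally show ?thesis .
  qed
  have "real (Suc s) ^ Suc s = (real s + 1) * (real s + 1) ^ s" by (simp add: add.commute)
  also have "\<dots> \<le> (real s + 1) * (3 * real s ^ s)"
    using key by (simp add: mult_left_mono)
  also have "\<dots> \<le> (real s + 1) * (3 * (3 ^ s * fact s))"
    using Suc.IH by (simp add: mult_left_mono)
  also have "\<dots> = 3 ^ Suc s * fact (Suc s)" by (simp add: algebra_simps)
  finally show ?case .
qed

lemma fact_double: "fact s * fact s \<le> (fact (2 * s) :: nat)"
proof -
  have "fact (2 * s) = ((2 * s) choose s) * (fact s * fact (2 * s - s))"
    using binomial_fact_lemma[of s "2 * s"] by (simp add: algebra_simps)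
  then have e: "fact (2 * s) = ((2 * s) choose s) * (fact s * fact s)" by simp
  have pos: "(2 * s) choose s > 0" by (rule zero_less_binomial) simp
  have c: "1 \<le> (2 * s) choose s" using Suc_leI[OF pos] by simp
  have "1 * (fact s * fact s) \<le> ((2 * s) choose s) * (fact s * (fact s :: nat))"
    by (rule mult_le_mono1[OF c])
  then show ?thesis using e by simp
qed

lemma choose_le_real: "real (n choose k) \<le> real n ^ k / fact k"
proof -
  have "(n choose k) * fact k \<le> n ^ k" by (rule binomial_fact_pow)
  then have "real (n choose k) * fact k \<le> real n ^ k"
    by (metis of_nat_fact of_nat_le_iff of_nat_mult of_nat_power)
  then show ?thesis by (simp add: field_simps)
qed

lemma ff_ratio_real:
  assumes "w \<le> v" "s \<le> v" "0 < v"
  shows "real (ff w s) / real (ff v s) \<le> (real w / real v) ^ s"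
proof -
  have pos: "real (ff v s) > 0" using ff_pos[OF assms(2)] by simp
  have "real (ff w s) * real v ^ s \<le> real (ff v s) * real w ^ s"
    using ff_ratio[OF assms(1), of s] by (metis of_nat_le_iff of_nat_mult of_nat_power)
  then show ?thesis using pos assms(3) by (simp add: field_simps power_divide)
qed

lemma P1_term:
  assumes s1: "1 \<le> s" and sm: "s \<le> m"
  shows "real (7 * m choose s) * real (10 * m choose (2 * s)) * (real (ff (2 * s) s) / real (ff (10 * m) s)) ^ 8 \<le> (1 / 2) ^ s"
proof -
  define y where "y = real s"
  define M where "M = real m"
  define F where "F = (fact s :: real)"
  have y1: "y \<ge> 1" using s1 by (simp add: y_def)
  have yM: "y \<le> M" using sm by (simp add: y_def M_def)
  have M1: "M \<ge> 1" using y1 yM by simp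
  have Fpos: "F > 0" by (simp add: F_def)
  have r0: "0 \<le> real (ff (2 * s) s) / real (ff (10 * m) s)" by simp
  have r: "real (ff (2 * s) s) / real (ff (10 * m) s) \<le> (y / (5 * M)) ^ s"
  proof -
    have "real (ff (2 * s) s) / real (ff (10 * m) s) \<le> (real (2 * s) / real (10 * m)) ^ s"
      by (rule ff_ratio_real) (use s1 sm in auto)
    also have "real (2 * s) / real (10 * m) = y / (5 * M)" by (simp add: y_def M_def)
    finally show ?thesis .
  qed
  have c1: "real (7 * m choose s) \<le> (7 * M) ^ s / F"
    using choose_le_real[of "7 * m" s] by (simp add: M_def F_def)
  have c2: "real (10 * m choose (2 * s)) \<le> (10 * M) ^ (2 * s) / (F * F)"
  proof -
    have "real (10 * m choose (2 * s)) \<le> (10 * M) ^ (2 * s) / fact (2 * s)"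
      using choose_le_real[of "10 * m" "2 * s"] by (simp add: M_def)
    also have "\<dots> \<le> (10 * M) ^ (2 * s) / (F * F)"
    proof (rule divide_left_mono)
      have "real (fact s * fact s) \<le> real (fact (2 * s))"
        using fact_double[of s] by (simp only: of_nat_le_iff)
      then show "F * F \<le> fact (2 * s)" by (simp add: F_def)
      show "0 \<le> (10 * M) ^ (2 * s)" using M1 by simp
      show "0 < fact (2 * s) * (F * F)" using Fpos by simp
    qed
    finally show ?thesis .
  qed
  have "real (7 * m choose s) * real (10 * m choose (2 * s)) * (real (ff (2 * s) s) / real (ff (10 * m) s)) ^ 8
      \<le> ((7 * M) ^ s / F) * ((10 * M) ^ (2 * s) / (F * F)) * ((y / (5 * M)) ^ s) ^ 8"
  proof (intro mult_mono c1 c2 power_mono r r0)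
  qed (use Fpos M1 in auto)
  also have "\<dots> = (7 * M * (10 * M) ^ 2 * (y / (5 * M)) ^ 8) ^ s / (F * F * F)"
  proof -
    have e1: "(10 * M) ^ (2 * s) = ((10 * M) ^ 2) ^ s" by (simp add: power_mult)
    have e2: "((y / (5 * M)) ^ s) ^ 8 = ((y / (5 * M)) ^ 8) ^ s" by (simp add: power_mult[symmetric] mult.commute)
    have e3: "(7 * M * (10 * M) ^ 2 * (y / (5 * M)) ^ 8) ^ s = (7 * M) ^ s * ((10 * M) ^ 2) ^ s * ((y / (5 * M)) ^ 8) ^ s"
      by (simp only: power_mult_distrib)
    show ?thesis unfolding e1 e2 e3 by (simp add: divide_simps)
  qed
  also have "\<dots> \<le> (7 * M * (10 * M) ^ 2 * (y / (5 * M)) ^ 8) ^ s * (27 / y ^ 3) ^ s"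
  proof -
    have "y ^ s \<le> 3 ^ s * F" using pow_le_fact[of s] by (simp add: y_def F_def)
    then have "(y ^ 3 / 27) ^ s \<le> F * F * F"
    proof -
      assume a: "y ^ s \<le> 3 ^ s * F"
      have "y ^ s / 3 ^ s \<le> F" using a by (simp add: field_simps)
      then have "(y ^ s / 3 ^ s) ^ 3 \<le> F ^ 3"
        by (rule power_mono) (use y1 in simp)
      moreover have "(y ^ s / 3 ^ s) ^ 3 = (y ^ 3 / 27) ^ s"
      proof -
        have t: "(3::real) ^ (s * 3) = 27 ^ s" by (simp add: mult.commute[of s 3] power_mult)
        show ?thesis by (simp add: power_divide power_mult[symmetric] mult.commute t)
      qed
      ultimately show ?thesis by (simp add: power3_eq_cube)
    qed
    then have "1 / (F * F * F) \<le> 1 / (y ^ 3 / 27) ^ s"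
      by (rule divide_left_mono) (use y1 Fpos in auto)
    also have "1 / (y ^ 3 / 27) ^ s = (27 / y ^ 3) ^ s" by (simp add: power_divide)
    finally have "1 / (F * F * F) \<le> (27 / y ^ 3) ^ s" .
    moreover have X0: "0 \<le> (7 * M * (10 * M) ^ 2 * (y / (5 * M)) ^ 8) ^ s" using y1 M1 by simp
    ultimately have "(7 * M * (10 * M) ^ 2 * (y / (5 * M)) ^ 8) ^ s * (1 / (F * F * F))
        \<le> (7 * M * (10 * M) ^ 2 * (y / (5 * M)) ^ 8) ^ s * (27 / y ^ 3) ^ s"
      by (rule mult_left_mono)
    then show ?thesis by simp
  qed
  also have "\<dots> = (7 * M * (10 * M) ^ 2 * (y / (5 * M)) ^ 8 * (27 / y ^ 3)) ^ s"
    by (simp only: power_mult_distrib)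
  also have "\<dots> \<le> (1 / 2) ^ s"
  proof (rule power_mono)
    have "7 * M * (10 * M) ^ 2 * (y / (5 * M)) ^ 8 * (27 / y ^ 3) = 18900 / 390625 * (y / M) ^ 5"
    proof -
      have "y \<noteq> 0" "M \<noteq> 0" using y1 M1 by auto
      then show ?thesis by (simp add: power_divide field_simps) algebra
    qed
    also have "\<dots> \<le> 18900 / 390625 * 1"
    proof (rule mult_left_mono)
      show "(y / M) ^ 5 \<le> 1" using yM y1 M1 by (simp add: power_le_one)
    qed simp
    finally show "7 * M * (10 * M) ^ 2 * (y / (5 * M)) ^ 8 * (27 / y ^ 3) \<le> 1 / 2" by simp
    show "0 \<le> 7 * M * (10 * M) ^ 2 * (y / (5 * M)) ^ 8 * (27 / y ^ 3)" using y1 M1 by simp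
  qed
  finally show ?thesis .
qed


lemma P2_term:
  assumes m1: "1 \<le> m" and ms: "m \<le> s" and s5: "s \<le> 5 * m + 1"
  shows "real (7 * m choose s) * real (7 * m choose (s + m - 1)) * (real (ff (s + m - 1) s) / real (ff (7 * m) s)) ^ 80 \<le> (1 / 8) ^ m"
proof -
  have r0: "0 \<le> real (ff (s + m - 1) s) / real (ff (7 * m) s)" by simp
  have r: "real (ff (s + m - 1) s) / real (ff (7 * m) s) \<le> (6 / 7) ^ m"
  proof -
    have "real (ff (s + m - 1) s) / real (ff (7 * m) s) \<le> (real (s + m - 1) / real (7 * m)) ^ s"
      by (rule ff_ratio_real) (use m1 ms s5 in auto)
    also have "\<dots> \<le> (6 / 7) ^ s"
    proof (rule power_mono)
      have "real (s + m - 1) \<le> 6 * real m" using s5 m1 by linarith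
      then show "real (s + m - 1) / real (7 * m) \<le> 6 / 7" using m1 by (simp add: field_simps)
    qed simp
    also have "\<dots> \<le> (6 / 7) ^ m" by (rule power_decreasing) (use ms in auto)
    finally show ?thesis .
  qed
  have c: "real (7 * m choose k) \<le> 2 ^ (7 * m)" for k
    using binomial_le_pow2[of "7 * m" k] by (metis of_nat_le_iff of_nat_numeral of_nat_power)
  have "real (7 * m choose s) * real (7 * m choose (s + m - 1)) * (real (ff (s + m - 1) s) / real (ff (7 * m) s)) ^ 80
      \<le> 2 ^ (7 * m) * 2 ^ (7 * m) * ((6 / 7) ^ m) ^ 80"
    by (intro mult_mono c power_mono r r0) auto
  also have "\<dots> = ((2::real) ^ 14 * (6 / 7) ^ 80) ^ m"
  proof -
    have a: "(2::real) ^ (7 * m) * 2 ^ (7 * m) = 2 ^ (14 * m)" by (simp add: power_add[symmetric])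
    have b: "(2::real) ^ (14 * m) = (2 ^ 14) ^ m" by (rule power_mult)
    have c: "((6 / 7 :: real) ^ m) ^ 80 = ((6 / 7) ^ 80) ^ m" by (simp only: power_mult[symmetric] mult.commute)
    show ?thesis unfolding a b c by (simp only: power_mult_distrib)
  qed
  also have "\<dots> \<le> (1 / 8) ^ m"
  proof (rule power_mono)
    have "(2::real) ^ 17 * 6 ^ 80 \<le> 7 ^ 80" by simp
    then show "(2::real) ^ 14 * (6 / 7) ^ 80 \<le> 1 / 8" by (simp add: power_divide field_simps)
  qed simp
  finally show ?thesis .
qed

lemma half_sum: "(\<Sum>s\<in>{1..m}. (1 / 2 :: real) ^ s) < 1"
proof -
  have "(\<Sum>s\<in>{1..m}. (1 / 2 :: real) ^ s) = 1 - (1 / 2) ^ m"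
    by (induction m) (auto simp: atLeastAtMostSuc_conv field_simps)
  then show ?thesis by simp
qed

lemma lin_exp: "1 \<le> m \<Longrightarrow> real (4 * m + 2) * (1 / 8) ^ m < 1"
proof (induction m rule: nat_induct_at_least)
  case base then show ?case by simp
next
  case (Suc m)
  have "real (4 * Suc m + 2) * (1 / 8) ^ Suc m = (real (4 * m + 2) + 4) / 8 * (1 / 8) ^ m" by simp
  also have "\<dots> \<le> real (4 * m + 2) * (1 / 8) ^ m"
  proof (rule mult_right_mono)
    show "(real (4 * m + 2) + 4) / 8 \<le> real (4 * m + 2)" using Suc by simp
  qed simp
  finally show ?case using Suc.IH by linarith
qed

lemma fam1:
  assumes m1: "1 \<le> m"
  shows "\<exists>Fs. length Fs = 8 \<and> set Fs \<subseteq> Lst (7 * m) {..<10 * m} {} {..<10 * m} \<and>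
     (\<forall>S W. S \<subseteq> {..<7 * m} \<longrightarrow> W \<subseteq> {..<10 * m} \<longrightarrow> 1 \<le> card S \<longrightarrow> card S \<le> m \<longrightarrow>
        card W = 2 * card S \<longrightarrow> \<not> (\<forall>F\<in>set Fs. \<forall>i\<in>S. F ! i \<in> W))"
proof -
  define Bad where "Bad = {(S, W). S \<subseteq> {..<7 * m} \<and> W \<subseteq> {..<10 * m} \<and> card S \<in> {1..m} \<and> card W = (\<lambda>s. 2 * s) (card S)}"
  have finB: "finite Bad"
    by (rule finite_subset[of _ "Pow {..<7 * m} \<times> Pow {..<10 * m}"]) (auto simp: Bad_def)
  have "(\<Sum>p\<in>Bad. (real (ff (card (snd p)) (card (fst p))) / real (ff (card {..<10 * m}) (card (fst p)))) ^ 8)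
     = (\<Sum>s\<in>{1..m} \<inter> {..card {..<7 * m}}. real (card {..<7 * m} choose s) * real (card {..<10 * m} choose (2 * s)) *
          (real (ff (2 * s) s) / real (ff (card {..<10 * m}) s)) ^ 8)"
    unfolding Bad_def
    by (rule sum_Bad[of "{..<7 * m}" "{..<10 * m}" "\<lambda>s w. (real (ff w s) / real (ff (card {..<10 * m}) s)) ^ 8"
          "{1..m}" "\<lambda>s. 2 * s"]) (rule finite_lessThan)+
  also have "\<dots> = (\<Sum>s\<in>{1..m}. real (7 * m choose s) * real (10 * m choose (2 * s)) *
          (real (ff (2 * s) s) / real (ff (10 * m) s)) ^ 8)"
    by (intro sum.cong) auto
  also have "\<dots> \<le> (\<Sum>s\<in>{1..m}. (1 / 2) ^ s)"
    by (rule sum_mono) (rule P1_term, auto)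
  also have "\<dots> < 1" by (rule half_sum)
  finally have sum: "(\<Sum>p\<in>Bad. (real (ff (card (snd p)) (card (fst p))) / real (ff (card {..<10 * m}) (card (fst p)))) ^ 8) < 1" .
  obtain Fs where Fs: "length Fs = 8" "set Fs \<subseteq> Lst (7 * m) {..<10 * m} {} {..<10 * m}"
    and nb: "\<forall>p\<in>Bad. \<not> (\<forall>F\<in>set Fs. \<forall>i\<in>fst p. F ! i \<in> snd p)"
  proof (rule exists_good_family[of "{..<10 * m}" "7 * m" Bad 8, OF _ _ finB _ sum, THEN exE])
    show "finite {..<10 * m}" by simp
    show "7 * m \<le> card {..<10 * m}" by simp
    show "S \<subseteq> {..<7 * m} \<and> W \<subseteq> {..<10 * m}" if "(S, W) \<in> Bad" for S W using that by (simp add: Bad_def)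
  qed blast
  show ?thesis
  proof (intro exI conjI allI impI)
    show "length Fs = 8" "set Fs \<subseteq> Lst (7 * m) {..<10 * m} {} {..<10 * m}" using Fs by auto
    fix S W assume "S \<subseteq> {..<7 * m}" "W \<subseteq> {..<10 * m}" "1 \<le> card S" "card S \<le> m" "card W = 2 * card S"
    then have "(S, W) \<in> Bad" by (auto simp: Bad_def)
    then show "\<not> (\<forall>F\<in>set Fs. \<forall>i\<in>S. F ! i \<in> W)" using nb by (metis fst_conv snd_conv)
  qed
qed

lemma fam2:
  assumes m1: "1 \<le> m"
  shows "\<exists>Fs. length Fs = 80 \<and> set Fs \<subseteq> Lst (7 * m) {..<7 * m} {} {..<7 * m} \<and>
     (\<forall>S W. S \<subseteq> {..<7 * m} \<longrightarrow> W \<subseteq> {..<7 * m} \<longrightarrow> m \<le> card S \<longrightarrow> card S \<le> 5 * m + 1 \<longrightarrow>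
        card W = card S + m - 1 \<longrightarrow> \<not> (\<forall>F\<in>set Fs. \<forall>i\<in>S. F ! i \<in> W))"
proof -
  define Bad where "Bad = {(S, W). S \<subseteq> {..<7 * m} \<and> W \<subseteq> {..<7 * m} \<and> card S \<in> {m..5 * m + 1} \<and> card W = (\<lambda>s. s + m - 1) (card S)}"
  have finB: "finite Bad"
    by (rule finite_subset[of _ "Pow {..<7 * m} \<times> Pow {..<7 * m}"]) (auto simp: Bad_def)
  have "(\<Sum>p\<in>Bad. (real (ff (card (snd p)) (card (fst p))) / real (ff (card {..<7 * m}) (card (fst p)))) ^ 80)
     = (\<Sum>s\<in>{m..5 * m + 1} \<inter> {..card {..<7 * m}}. real (card {..<7 * m} choose s) * real (card {..<7 * m} choose (s + m - 1)) *
          (real (ff (s + m - 1) s) / real (ff (card {..<7 * m}) s)) ^ 80)"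
    unfolding Bad_def
    by (rule sum_Bad[of "{..<7 * m}" "{..<7 * m}" "\<lambda>s w. (real (ff w s) / real (ff (card {..<7 * m}) s)) ^ 80"
          "{m..5 * m + 1}" "\<lambda>s. s + m - 1"]) (rule finite_lessThan)+
  also have "\<dots> = (\<Sum>s\<in>{m..5 * m + 1}. real (7 * m choose s) * real (7 * m choose (s + m - 1)) *
          (real (ff (s + m - 1) s) / real (ff (7 * m) s)) ^ 80)"
    using m1 by (intro sum.cong) auto
  also have "\<dots> \<le> (\<Sum>s\<in>{m..5 * m + 1}. (1 / 8) ^ m)"
    by (rule sum_mono) (rule P2_term, use m1 in auto)
  also have "\<dots> = real (4 * m + 2) * (1 / 8) ^ m" by simp
  also have "\<dots> < 1" by (rule lin_exp[OF m1])
  finally have sum: "(\<Sum>p\<in>Bad. (real (ff (card (snd p)) (card (fst p))) / real (ff (card {..<7 * m}) (card (fst p)))) ^ 80) < 1" .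
  obtain Fs where Fs: "length Fs = 80" "set Fs \<subseteq> Lst (7 * m) {..<7 * m} {} {..<7 * m}"
    and nb: "\<forall>p\<in>Bad. \<not> (\<forall>F\<in>set Fs. \<forall>i\<in>fst p. F ! i \<in> snd p)"
  proof (rule exists_good_family[of "{..<7 * m}" "7 * m" Bad 80, OF _ _ finB _ sum, THEN exE])
    show "finite {..<7 * m}" by simp
    show "7 * m \<le> card {..<7 * m}" by simp
    show "S \<subseteq> {..<7 * m} \<and> W \<subseteq> {..<7 * m}" if "(S, W) \<in> Bad" for S W using that by (simp add: Bad_def)
  qed blast
  show ?thesis
  proof (intro exI conjI allI impI)
    show "length Fs = 80" "set Fs \<subseteq> Lst (7 * m) {..<7 * m} {} {..<7 * m}" using Fs by auto
    fix S W assume "S \<subseteq> {..<7 * m}" "W \<subseteq> {..<7 * m}" "m \<le> card S" "card S \<le> 5 * m + 1" "card W = card S + m - 1"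
    then have "(S, W) \<in> Bad" by (auto simp: Bad_def)
    then show "\<not> (\<forall>F\<in>set Fs. \<forall>i\<in>S. F ! i \<in> W)" using nb by (metis fst_conv snd_conv)
  qed
qed



lemma hall:
  fixes R :: "'a \<Rightarrow> 'b set"
  assumes "finite A" "\<forall>a\<in>A. finite (R a)" "\<forall>S\<subseteq>A. card S \<le> card (\<Union>(R ` S))"
  shows "\<exists>f. inj_on f A \<and> (\<forall>a\<in>A. f a \<in> R a)"
  using assms
proof (induction "card A" arbitrary: A R rule: less_induct)
  case less
  have finU: "finite (\<Union>(R ` T))" if "T \<subseteq> A" for T
  proof (intro finite_Union)
    show "finite (R ` T)" using that less.prems(1) finite_subset by blast
    show "\<And>M. M \<in> R ` T \<Longrightarrow> finite M" using that less.prems(2) by auto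
  qed
  show ?case
  proof (cases "A = {}")
    case True then show ?thesis by auto
  next
    case Ane: False
    show ?thesis
    proof (cases "\<exists>S. S \<subseteq> A \<and> S \<noteq> {} \<and> S \<noteq> A \<and> card (\<Union>(R ` S)) = card S")
      case True
      then obtain S where S: "S \<subseteq> A" "S \<noteq> {}" "S \<noteq> A" and cS: "card (\<Union>(R ` S)) = card S" by blast
      have finS: "finite S" using S less.prems(1) finite_subset by blast
      have SA: "card S < card A" using S less.prems(1) by (simp add: psubset_card_mono psubsetI)
      obtain f1 where f1: "inj_on f1 S" "\<forall>a\<in>S. f1 a \<in> R a"
        using less.hyps[OF SA, of R] finS S less.prems by auto
      define N where "N = \<Union>(R ` S)"
      define R' where "R' a = R a - N" for a
      have finN: "finite N" using finU[OF S(1)] by (simp add: N_def)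
      have ASA: "card (A - S) < card A"
        using S less.prems(1) finS by (metis card_Diff_subset card_gt_0_iff diff_less subset_empty)
      have hallR': "card T \<le> card (\<Union>(R' ` T))" if T: "T \<subseteq> A - S" for T
      proof -
        have finT: "finite T" using T less.prems(1) finite_subset by blast
        have e1: "\<Union>(R' ` T) = \<Union>(R ` T) - N" by (auto simp: R'_def)
        have e2: "\<Union>(R ` (T \<union> S)) = (\<Union>(R ` T) - N) \<union> N" by (auto simp: N_def)
        have "card T + card S = card (T \<union> S)"
          using T finT finS by (subst card_Un_disjoint) auto
        also have "\<dots> \<le> card (\<Union>(R ` (T \<union> S)))"
        proof -
          have "T \<union> S \<subseteq> A" using T S by auto
          then show ?thesis using less.prems(3) by blast
        qed
        also have "\<dots> = card (\<Union>(R ` T) - N) + card N"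
          unfolding e2 using finU[of T] T finN by (subst card_Un_disjoint) auto
        finally show ?thesis unfolding e1 using cS by (simp add: N_def)
      qed
      have finR': "\<forall>a\<in>A - S. finite (R' a)" using less.prems(2) by (auto simp: R'_def)
      obtain f2 where f2: "inj_on f2 (A - S)" "\<forall>a\<in>A - S. f2 a \<in> R' a"
        using less.hyps[OF ASA, of R'] less.prems(1) finR' hallR' by auto
      define f where "f a = (if a \<in> S then f1 a else f2 a)" for a
      show ?thesis
      proof (intro exI conjI)
        show "\<forall>a\<in>A. f a \<in> R a" using f1 f2 by (auto simp: f_def R'_def)
        show "inj_on f A"
        proof (rule inj_onI)
          fix x y assume x: "x \<in> A" and y: "y \<in> A" and fxy: "f x = f y"
          have inN: "f1 a \<in> N" if "a \<in> S" for a using f1 that by (auto simp: N_def)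
          have notN: "f2 a \<notin> N" if "a \<in> A - S" for a using f2 that by (auto simp: R'_def)
          show "x = y"
          proof (cases "x \<in> S"; cases "y \<in> S")
            assume "x \<in> S" "y \<in> S" then show ?thesis using fxy f1(1) by (auto simp: f_def inj_on_def)
          next
            assume "x \<in> S" "y \<notin> S" then show ?thesis using fxy inN[of x] notN[of y] y by (auto simp: f_def)
          next
            assume "x \<notin> S" "y \<in> S" then show ?thesis using fxy inN[of y] notN[of x] x by (auto simp: f_def)
          next
            assume "x \<notin> S" "y \<notin> S" then show ?thesis using fxy f2(1) x y by (auto simp: f_def inj_on_def)
          qed
        qed
      qed
    next
      case False
      then have strict: "card S < card (\<Union>(R ` S))" if "S \<subseteq> A" "S \<noteq> {}" "S \<noteq> A" for S
      proof -
        have "card S \<le> card (\<Union>(R ` S))" using less.prems(3) that(1) by blast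
        moreover have "card (\<Union>(R ` S)) \<noteq> card S" using False that by blast
        ultimately show ?thesis by linarith
      qed
      obtain a where a: "a \<in> A" using Ane by blast
      have "card {a} \<le> card (\<Union>(R ` {a}))" using less.prems(3) a by auto
      then have "R a \<noteq> {}" by auto
      then obtain b where b: "b \<in> R a" by blast
      define R' where "R' x = R x - {b}" for x
      have AA: "card (A - {a}) < card A" using a less.prems(1) by (meson card_Diff1_less)
      have hallR': "card T \<le> card (\<Union>(R' ` T))" if T: "T \<subseteq> A - {a}" for T
      proof (cases "T = {}")
        case True then show ?thesis by simp
      next
        case False
        have TA: "T \<subseteq> A" "T \<noteq> A" using T a by auto
        have "card T < card (\<Union>(R ` T))" using strict[OF TA(1) False TA(2)] .
        moreover have e: "\<Union>(R' ` T) = \<Union>(R ` T) - {b}" by (auto simp: R'_def)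
        moreover have "card (\<Union>(R ` T)) - 1 \<le> card (\<Union>(R ` T) - {b})"
          by (simp add: card_Diff_singleton_if)
        ultimately show ?thesis unfolding e by linarith
      qed
      have finR': "\<forall>x\<in>A - {a}. finite (R' x)" using less.prems(2) by (auto simp: R'_def)
      obtain g where g: "inj_on g (A - {a})" "\<forall>x\<in>A - {a}. g x \<in> R' x"
        using less.hyps[OF AA, of R'] less.prems(1) finR' hallR' by auto
      define f where "f = g(a := b)"
      show ?thesis
      proof (intro exI conjI)
        show "\<forall>x\<in>A. f x \<in> R x" using g b by (auto simp: f_def R'_def)
        have "f ` (A - {a}) = g ` (A - {a})" by (auto simp: f_def)
        moreover have "b \<notin> g ` (A - {a})" using g(2) by (auto simp: R'_def)
        ultimately have nb: "f a \<notin> f ` (A - {a})" by (simp add: f_def)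
        have "inj_on f (A - {a})" using g(1) by (simp add: f_def inj_on_def)
        then have "inj_on f (insert a (A - {a}))" using nb by (simp only: inj_on_insert Diff_idemp Diff_insert_absorb) (simp add: Diff_insert_absorb)
        moreover have "insert a (A - {a}) = A" using a by auto
        ultimately show "inj_on f A" by simp
      qed
    qed
  qed
qed



definition dA :: "('a \<times> 'a) set \<Rightarrow> 'a \<Rightarrow> nat" where "dA E u = card {y. (u, y) \<in> E}"
definition dB :: "('a \<times> 'a) set \<Rightarrow> 'a \<Rightarrow> nat" where "dB E w = card {x. (x, w) \<in> E}"

definition Inv :: "'a set \<Rightarrow> 'a set \<Rightarrow> nat \<Rightarrow> ('a \<times> 'a) set \<Rightarrow> ('a \<times> 'a) set \<Rightarrow> bool" where
  "Inv A B d E0 E \<longleftrightarrow> E0 \<subseteq> E \<and> E \<subseteq> A \<times> B \<and> (\<forall>u\<in>A. dA E u \<le> d) \<and> (\<forall>w\<in>B. dB E w \<le> d)"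

lemma card_eq_sum_dA:
  assumes "finite A" "finite B" "E \<subseteq> A \<times> B"
  shows "card E = (\<Sum>u\<in>A. dA E u)"
proof -
  have e: "E = (SIGMA u:A. {y. (u, y) \<in> E})" using assms(3) by auto
  have "\<forall>u\<in>A. finite {y. (u, y) \<in> E}"
    using assms by (auto intro: finite_subset[of _ B])
  then have "card (SIGMA u:A. {y. (u, y) \<in> E}) = (\<Sum>u\<in>A. card {y. (u, y) \<in> E})"
    using assms(1) by (rule card_SigmaI[rotated])
  then show ?thesis using e by (simp add: dA_def)
qed

lemma card_eq_sum_dB:
  assumes "finite A" "finite B" "E \<subseteq> A \<times> B"
  shows "card E = (\<Sum>w\<in>B. dB E w)"
proof -
  have "card E = card (prod.swap ` E)" by (simp add: card_image)
  also have "\<dots> = (\<Sum>w\<in>B. dA (prod.swap ` E) w)"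
    by (rule card_eq_sum_dA[OF assms(2,1)]) (use assms(3) in auto)
  also have "\<dots> = (\<Sum>w\<in>B. dB E w)"
  proof (rule sum.cong[OF refl])
    fix w have "{y. (w, y) \<in> prod.swap ` E} = {x. (x, w) \<in> E}" by force
    then show "dA (prod.swap ` E) w = dB E w" by (simp add: dA_def dB_def)
  qed
  finally show ?thesis .
qed

lemma all_eq_from_sum:
  fixes f :: "'a \<Rightarrow> nat"
  assumes "finite A" "\<forall>u\<in>A. f u \<le> d" "(\<Sum>u\<in>A. f u) \<ge> card A * d"
  shows "\<forall>u\<in>A. f u = d"
proof (rule ccontr)
  assume "\<not> (\<forall>u\<in>A. f u = d)"
  then obtain u where u: "u \<in> A" "f u < d" using assms(2) le_neq_implies_less by blast
  have "(\<Sum>u\<in>A. f u) < (\<Sum>u\<in>A. d)"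
    by (rule sum_strict_mono_ex1) (use assms u in auto)
  then show False using assms(3) by simp
qed

lemma exists_deficient:
  fixes f :: "'a \<Rightarrow> nat"
  assumes "finite A" "(\<Sum>u\<in>A. f u) < card A * d"
  shows "\<exists>u\<in>A. f u < d"
proof (rule ccontr)
  assume "\<not> (\<exists>u\<in>A. f u < d)"
  then have "(\<Sum>u\<in>A. d) \<le> (\<Sum>u\<in>A. f u)" by (intro sum_mono) auto
  then show False using assms by simp
qed

lemma finite_fibA: "E \<subseteq> A \<times> B \<Longrightarrow> finite B \<Longrightarrow> finite {y. (u, y) \<in> E}"
  by (auto intro: finite_subset[of _ B])
lemma finite_fibB: "E \<subseteq> A \<times> B \<Longrightarrow> finite A \<Longrightarrow> finite {x. (x, w) \<in> E}"
  by (auto intro: finite_subset[of _ A])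

lemma add_edge:
  assumes fin: "finite A" "finite B" and I: "Inv A B d E0 E"
    and a: "a \<in> A" and y: "y \<in> B" and ay: "(a, y) \<notin> E" and da: "dA E a < d" and dy: "dB E y < d"
  shows "Inv A B d E0 (insert (a, y) E) \<and> card (insert (a, y) E) = Suc (card E)"
proof -
  have EAB: "E \<subseteq> A \<times> B" using I by (simp add: Inv_def)
  have finE: "finite E" using EAB fin finite_subset by blast
  have degA: "dA (insert (a, y) E) u \<le> d" if u: "u \<in> A" for u
  proof (cases "u = a")
    case True
    have "{z. (u, z) \<in> insert (a, y) E} = insert y {z. (a, z) \<in> E}" using True by auto
    then have "dA (insert (a, y) E) u = Suc (dA E a)"
      using ay finite_fibA[OF EAB fin(2)] by (simp add: dA_def)
    then show ?thesis using da by simp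
  next
    case False
    have "{z. (u, z) \<in> insert (a, y) E} = {z. (u, z) \<in> E}" using False by auto
    then show ?thesis using I u by (simp add: dA_def Inv_def)
  qed
  have degB: "dB (insert (a, y) E) w \<le> d" if w: "w \<in> B" for w
  proof (cases "w = y")
    case True
    have "{z. (z, w) \<in> insert (a, y) E} = insert a {z. (z, y) \<in> E}" using True by auto
    then have "dB (insert (a, y) E) w = Suc (dB E y)"
      using ay finite_fibB[OF EAB fin(1)] by (simp add: dB_def)
    then show ?thesis using dy by simp
  next
    case False
    have "{z. (z, w) \<in> insert (a, y) E} = {z. (z, w) \<in> E}" using False by auto
    then show ?thesis using I w by (simp add: dB_def Inv_def)
  qed
  show ?thesis using I degA degB a y ay finE by (auto simp: Inv_def)
qed


lemma no_swap_bound: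
  assumes fin: "finite A" "finite B" and EAB: "E \<subseteq> A \<times> B"
    and dBd: "\<forall>w\<in>B. dB E w \<le> d"
    and X: "\<forall>x\<in>X. \<exists>y\<in>N. (x, y) \<in> E" and XA: "X \<subseteq> A" and NB: "N \<subseteq> B"
  shows "card X \<le> card N * d"
proof -
  have finE: "finite E" using EAB fin finite_subset by blast
  have finN: "finite N" using NB fin finite_subset by blast
  define P where "P = {p \<in> E. snd p \<in> N}"
  define h where "h x = (x, SOME y. y \<in> N \<and> (x, y) \<in> E)" for x
  have hP: "h ` X \<subseteq> P"
  proof
    fix p assume "p \<in> h ` X"
    then obtain x where x: "x \<in> X" "p = h x" by blast
    have "\<exists>y. y \<in> N \<and> (x, y) \<in> E" using X x by blast
    then have "(SOME y. y \<in> N \<and> (x, y) \<in> E) \<in> N \<and> (x, SOME y. y \<in> N \<and> (x, y) \<in> E) \<in> E"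
      by (rule someI_ex)
    then show "p \<in> P" using x by (simp add: P_def h_def)
  qed
  have injh: "inj_on h X" by (rule inj_onI) (simp add: h_def)
  have finP: "finite P" using finE by (simp add: P_def)
  have "card X = card (h ` X)" using injh by (simp add: card_image)
  also have "\<dots> \<le> card P" using hP finP by (rule card_mono[rotated])
  also have "P = (\<Union>y\<in>N. (\<lambda>x. (x, y)) ` {x. (x, y) \<in> E})" by (auto simp: P_def)
  also have "card \<dots> \<le> (\<Sum>y\<in>N. card ((\<lambda>x. (x, y)) ` {x. (x, y) \<in> E}))"
    using finN by (rule card_UN_le)
  also have "\<dots> \<le> (\<Sum>y\<in>N. d)"
  proof (rule sum_mono)
    fix y assume y: "y \<in> N"
    have "card ((\<lambda>x. (x, y)) ` {x. (x, y) \<in> E}) = dB E y"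
      by (simp add: card_image inj_on_def dB_def)
    then show "card ((\<lambda>x. (x, y)) ` {x. (x, y) \<in> E}) \<le> d" using dBd y NB by auto
  qed
  finally show ?thesis by simp
qed

lemma step:
  assumes fin: "finite A" "finite B" and cA: "card A = n" and cB: "card B = n"
    and I: "Inv A B d E0 E" and lt: "card E < n * d"
    and E0deg: "\<forall>u\<in>A. dA E0 u < d" and big: "d * d \<le> n"
  shows "\<exists>E'. Inv A B d E0 E' \<and> card E' = Suc (card E)"
proof -
  have EAB: "E \<subseteq> A \<times> B" and E0E: "E0 \<subseteq> E" and dAd: "\<forall>u\<in>A. dA E u \<le> d" and dBd: "\<forall>w\<in>B. dB E w \<le> d"
    using I by (auto simp: Inv_def)
  have finE: "finite E" using EAB fin finite_subset by blast
  have sA: "(\<Sum>u\<in>A. dA E u) < card A * d" using card_eq_sum_dA[OF fin EAB] lt cA by simp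
  have sB: "(\<Sum>w\<in>B. dB E w) < card B * d" using card_eq_sum_dB[OF fin EAB] lt cB by simp
  obtain a where a: "a \<in> A" "dA E a < d" using exists_deficient[OF fin(1) sA] by blast
  obtain b where b: "b \<in> B" "dB E b < d" using exists_deficient[OF fin(2) sB] by blast
  show ?thesis
  proof (cases "(a, b) \<in> E")
    case False
    then show ?thesis using add_edge[OF fin I a(1) b(1) False a(2) b(2)] by blast
  next
    case abE: True
    show ?thesis
    proof (cases "\<exists>y\<in>B. (a, y) \<notin> E \<and> dB E y < d")
      case True
      then obtain y where y: "y \<in> B" "(a, y) \<notin> E" "dB E y < d" by blast
      show ?thesis using add_edge[OF fin I a(1) y(1) y(2) a(2) y(3)] by blast
    next
      case full1: False
      show ?thesis
      proof (cases "\<exists>x\<in>A. (x, b) \<notin> E \<and> dA E x < d")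
        case True
        then obtain x where x: "x \<in> A" "(x, b) \<notin> E" "dA E x < d" by blast
        show ?thesis using add_edge[OF fin I x(1) b(1) x(2) x(3) b(2)] by blast
      next
        case full2: False
        define Na where "Na = {z. (a, z) \<in> E}"
        define Nb where "Nb = {z. (z, b) \<in> E}"
        have claim: "\<exists>x y. x \<in> A \<and> (x, b) \<notin> E \<and> y \<in> B \<and> (a, y) \<notin> E \<and> (x, y) \<in> E \<and> (x, y) \<notin> E0"
        proof (rule ccontr)
          assume no: "\<not> ?thesis"
          have X: "\<forall>x\<in>A - Nb. \<exists>y\<in>Na. (x, y) \<in> E"
          proof
            fix x assume x: "x \<in> A - Nb"
            then have xA: "x \<in> A" and xb: "(x, b) \<notin> E" by (auto simp: Nb_def)
            have dx: "dA E x \<ge> d" using full2 xA xb by auto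
            have "\<not> {y. (x, y) \<in> E} \<subseteq> {y. (x, y) \<in> E0}"
            proof
              assume "{y. (x, y) \<in> E} \<subseteq> {y. (x, y) \<in> E0}"
              then have "dA E x \<le> dA E0 x"
                unfolding dA_def by (rule card_mono[OF finite_fibA[OF _ fin(2)], rotated]) (use E0E EAB in auto)
              then show False using dx E0deg xA by fastforce
            qed
            then obtain y where y: "(x, y) \<in> E" "(x, y) \<notin> E0" by blast
            have "y \<in> B" using y EAB by auto
            then have "y \<in> Na" using no xA xb y by (auto simp: Na_def)
            then show "\<exists>y\<in>Na. (x, y) \<in> E" using y by blast
          qed
          have "card (A - Nb) \<le> card Na * d"
            by (rule no_swap_bound[OF fin EAB dBd X]) (use EAB in \<open>auto simp: Na_def\<close>)
          moreover have "card Na \<le> d - 1" using a by (simp add: Na_def dA_def)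
          moreover have "card Nb \<le> d - 1" using b by (simp add: Nb_def dB_def)
          moreover have "card A - card Nb \<le> card (A - Nb)" by (rule diff_card_le_card_Diff) (simp add: Nb_def finite_fibB[OF EAB fin(1)])
          ultimately have h: "n - (d - 1) \<le> (d - 1) * d"
            using cA by (meson le_trans diff_le_mono2 mult_le_mono1)
          obtain k where k: "d = Suc k" using a(2) by (cases d) auto
          have "n \<le> k * Suc k + k" using h k by simp
          moreover have "k * Suc k + k < Suc k * Suc k" by simp
          moreover have "d * d = Suc k * Suc k" using k by simp
          ultimately show False using big by linarith
        qed
        then obtain x y where x: "x \<in> A" and xb: "(x, b) \<notin> E" and y: "y \<in> B" and ay: "(a, y) \<notin> E"
          and xy: "(x, y) \<in> E" and xy0: "(x, y) \<notin> E0" by blast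
        have xa: "x \<noteq> a" using xb abE by auto
        have yb: "y \<noteq> b" using ay abE by auto
        define E' where "E' = insert (a, y) (insert (x, b) (E - {(x, y)}))"
        have E'AB: "E' \<subseteq> A \<times> B" using EAB a x y b by (auto simp: E'_def)
        have E0E': "E0 \<subseteq> E'" using E0E xy0 by (auto simp: E'_def)
        have degA: "dA E' u \<le> d" if u: "u \<in> A" for u
        proof -
          have fu: "finite {z. (u, z) \<in> E}" using finite_fibA[OF EAB fin(2)] .
          consider "u = a" | "u = x" | "u \<noteq> a" "u \<noteq> x" by blast
          then show ?thesis
          proof cases
            case 1
            have "{z. (u, z) \<in> E'} = insert y {z. (a, z) \<in> E}" using 1 xa by (auto simp: E'_def)
            then have "dA E' u = Suc (dA E a)" using ay finite_fibA[OF EAB fin(2)] by (simp add: dA_def)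
            then show ?thesis using a by simp
          next
            case 2
            have "{z. (u, z) \<in> E'} = insert b ({z. (x, z) \<in> E} - {y})" using 2 xa yb by (auto simp: E'_def)
            moreover have "card (insert b ({z. (x, z) \<in> E} - {y})) = dA E x"
            proof -
              have "b \<notin> {z. (x, z) \<in> E} - {y}" using xb by auto
              then have "card (insert b ({z. (x, z) \<in> E} - {y})) = Suc (card ({z. (x, z) \<in> E} - {y}))"
                using finite_fibA[OF EAB fin(2)] by simp
              also have "\<dots> = card {z. (x, z) \<in> E}"
                by (rule card_Suc_Diff1) (use xy finite_fibA[OF EAB fin(2)] in auto)
              finally show ?thesis by (simp add: dA_def)
            qed
            ultimately show ?thesis using dAd x by (simp add: dA_def)
          next
            case 3
            have "{z. (u, z) \<in> E'} = {z. (u, z) \<in> E}" using 3 by (auto simp: E'_def)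
            then show ?thesis using dAd u by (simp add: dA_def)
          qed
        qed
        have degB: "dB E' w \<le> d" if w: "w \<in> B" for w
        proof -
          consider "w = b" | "w = y" | "w \<noteq> b" "w \<noteq> y" by blast
          then show ?thesis
          proof cases
            case 1
            have "{z. (z, w) \<in> E'} = insert x {z. (z, b) \<in> E}" using 1 yb by (auto simp: E'_def)
            then have "dB E' w = Suc (dB E b)" using xb finite_fibB[OF EAB fin(1)] by (simp add: dB_def)
            then show ?thesis using b by simp
          next
            case 2
            have "{z. (z, w) \<in> E'} = insert a ({z. (z, y) \<in> E} - {x})" using 2 xa yb by (auto simp: E'_def)
            moreover have "card (insert a ({z. (z, y) \<in> E} - {x})) = dB E y"
            proof -
              have "a \<notin> {z. (z, y) \<in> E} - {x}" using ay by auto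
              then have "card (insert a ({z. (z, y) \<in> E} - {x})) = Suc (card ({z. (z, y) \<in> E} - {x}))"
                using finite_fibB[OF EAB fin(1)] by simp
              also have "\<dots> = card {z. (z, y) \<in> E}"
                by (rule card_Suc_Diff1) (use xy finite_fibB[OF EAB fin(1)] in auto)
              finally show ?thesis by (simp add: dB_def)
            qed
            ultimately show ?thesis using dBd y by (simp add: dB_def)
          next
            case 3
            have "{z. (z, w) \<in> E'} = {z. (z, w) \<in> E}" using 3 by (auto simp: E'_def)
            then show ?thesis using dBd w by (simp add: dB_def)
          qed
        qed
        have cE': "card E' = Suc (card E)"
        proof -
          have n1: "(x, b) \<notin> E - {(x, y)}" using xb by auto
          have n2: "(a, y) \<notin> insert (x, b) (E - {(x, y)})" using ay xa by auto
          have f1: "finite (E - {(x, y)})" using finE by simp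
          have f2: "finite (insert (x, b) (E - {(x, y)}))" using f1 by simp
          have "card E' = Suc (card (insert (x, b) (E - {(x, y)})))"
            unfolding E'_def by (rule card_insert_disjoint[OF f2 n2])
          also have "card (insert (x, b) (E - {(x, y)})) = Suc (card (E - {(x, y)}))"
            by (rule card_insert_disjoint[OF f1 n1])
          also have "Suc (card (E - {(x, y)})) = card E" by (rule card_Suc_Diff1[OF finE xy])
          finally show ?thesis .
        qed
        show ?thesis
          by (rule exI[of _ E']) (use E'AB E0E' degA degB cE' in \<open>simp add: Inv_def\<close>)
      qed
    qed
  qed
qed

lemma completion:
  assumes fin: "finite A" "finite B" and cA: "card A = n" and cB: "card B = n"
    and E0AB: "E0 \<subseteq> A \<times> B" and d0A: "\<forall>u\<in>A. dA E0 u < d" and d0B: "\<forall>w\<in>B. dB E0 w < d"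
    and big: "d * d \<le> n"
  shows "\<exists>E. E0 \<subseteq> E \<and> E \<subseteq> A \<times> B \<and> (\<forall>u\<in>A. dA E u = d) \<and> (\<forall>w\<in>B. dB E w = d)"
proof -
  have I0: "Inv A B d E0 E0" using E0AB d0A d0B by (auto simp: Inv_def less_imp_le)
  have gen: "\<forall>E. Inv A B d E0 E \<longrightarrow> n * d - card E = k \<longrightarrow> (\<exists>E'. Inv A B d E0 E' \<and> n * d \<le> card E')" for k
  proof (induction k)
    case 0 then show ?case by auto
  next
    case (Suc k)
    show ?case
    proof (intro allI impI)
      fix E assume I: "Inv A B d E0 E" and k: "n * d - card E = Suc k"
      then have lt: "card E < n * d" by simp
      obtain E1 where E1: "Inv A B d E0 E1" "card E1 = Suc (card E)"
        using step[OF fin cA cB I lt d0A big] by blast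
      have "n * d - card E1 = k" using E1(2) k by simp
      then show "\<exists>E'. Inv A B d E0 E' \<and> n * d \<le> card E'" using Suc.IH E1(1) by blast
    qed
  qed
  obtain E where I: "Inv A B d E0 E" and c: "n * d \<le> card E" using gen[of "n * d - card E0"] I0 by blast
  have EAB: "E \<subseteq> A \<times> B" using I by (simp add: Inv_def)
  have "\<forall>u\<in>A. dA E u = d"
    by (rule all_eq_from_sum[OF fin(1)]) (use I c cA card_eq_sum_dA[OF fin EAB] in \<open>auto simp: Inv_def\<close>)
  moreover have "\<forall>w\<in>B. dB E w = d"
    by (rule all_eq_from_sum[OF fin(2)]) (use I c cB card_eq_sum_dB[OF fin EAB] in \<open>auto simp: Inv_def\<close>)
  ultimately show ?thesis using I by (auto simp: Inv_def)
qed





lemma pad_set: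
  assumes "finite V" "U \<subseteq> V" "card U \<le> c" "c \<le> card V"
  shows "\<exists>W. U \<subseteq> W \<and> W \<subseteq> V \<and> card W = c"
proof -
  have finU: "finite U" using assms finite_subset by blast
  have "c - card U \<le> card (V - U)" using assms by (simp add: card_Diff_subset finU)
  then obtain Z where Z: "Z \<subseteq> V - U" "card Z = c - card U" "finite Z"
    by (rule obtain_subset_with_card_n)
  have "card (U \<union> Z) = card U + card Z" using Z finU by (subst card_Un_disjoint) auto
  then show ?thesis using Z assms by (intro exI[of _ "U \<union> Z"]) auto
qed

lemma half_mod:
  fixes M :: nat
  assumes U: "U \<subseteq> {..<2 * M}"
  shows "card U \<le> 2 * card ((\<lambda>v. v mod M) ` U)"
proof -
  have finU: "finite U" using U finite_subset by blast
  have "U \<subseteq> (\<Union>r\<in>(\<lambda>v. v mod M) ` U. {v \<in> U. v mod M = r})" by blast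
  then have "card U \<le> card (\<Union>r\<in>(\<lambda>v. v mod M) ` U. {v \<in> U. v mod M = r})"
    by (rule card_mono[rotated]) (use finU in auto)
  also have "\<dots> \<le> (\<Sum>r\<in>(\<lambda>v. v mod M) ` U. card {v \<in> U. v mod M = r})"
    by (rule card_UN_le) (use finU in auto)
  also have "\<dots> \<le> (\<Sum>r\<in>(\<lambda>v. v mod M) ` U. 2)"
  proof (rule sum_mono)
    fix r assume "r \<in> (\<lambda>v. v mod M) ` U"
    have "{v \<in> U. v mod M = r} \<subseteq> {r, r + M}"
    proof
      fix v assume v: "v \<in> {v \<in> U. v mod M = r}"
      then have "v < 2 * M" using U by auto
      then have "v div M < 2" by (rule less_mult_imp_div_less)
      then have "v div M = 0 \<or> v div M = 1" by linarith
      moreover have "v = v div M * M + r" using v div_mult_mod_eq[of v M] by simp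
      ultimately show "v \<in> {r, r + M}" by auto
    qed
    then have "card {v \<in> U. v mod M = r} \<le> card {r, r + M}" by (rule card_mono[rotated]) simp
    also have "\<dots> \<le> 2" by (simp add: card_insert_if)
    finally show "card {v \<in> U. v mod M = r} \<le> 2" .
  qed
  finally show ?thesis by simp
qed

lemma expand_fam:
  assumes Fs: "set Fs \<subseteq> Lst u V {} V" and finV: "finite V"
    and good: "\<forall>S W. S \<subseteq> {..<u} \<longrightarrow> W \<subseteq> V \<longrightarrow> 1 \<le> card S \<longrightarrow> card S \<le> m \<longrightarrow>
        card W = 2 * card S \<longrightarrow> \<not> (\<forall>F\<in>set Fs. \<forall>i\<in>S. F ! i \<in> W)"
    and S: "S \<subseteq> {..<u}" "1 \<le> card S" "card S \<le> m" and mV: "2 * m \<le> card V"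
  shows "2 * card S \<le> card (\<Union>F\<in>set Fs. (\<lambda>i. F ! i) ` S)"
proof (rule ccontr)
  assume "\<not> ?thesis"
  then have lt: "card (\<Union>F\<in>set Fs. (\<lambda>i. F ! i) ` S) \<le> 2 * card S" by simp
  have sub: "(\<Union>F\<in>set Fs. (\<lambda>i. F ! i) ` S) \<subseteq> V"
  proof
    fix v assume "v \<in> (\<Union>F\<in>set Fs. (\<lambda>i. F ! i) ` S)"
    then obtain F i where F: "F \<in> set Fs" "i \<in> S" "v = F ! i" by blast
    then have "F \<in> Lst u V {} V" using Fs by auto
    then have "i < length F" "set F \<subseteq> V" using F S(1) by (auto simp: Lst_def)
    then show "v \<in> V" using F(3) nth_mem by blast
  qed
  obtain W where W: "(\<Union>F\<in>set Fs. (\<lambda>i. F ! i) ` S) \<subseteq> W" "W \<subseteq> V" "card W = 2 * card S"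
    using pad_set[OF finV sub lt] S(3) mV by auto
  have "\<forall>F\<in>set Fs. \<forall>i\<in>S. F ! i \<in> W" using W(1) by auto
  moreover have "S \<subseteq> {..<u}" "W \<subseteq> V" "1 \<le> card S" "card S \<le> m" "card W = 2 * card S" using S W by auto
  ultimately show False using good by blast
qed

lemma P2_cons:
  fixes m :: nat
  assumes good: "\<forall>S W. S \<subseteq> {..<7 * m} \<longrightarrow> W \<subseteq> {..<7 * m} \<longrightarrow> m \<le> card S \<longrightarrow> card S \<le> 5 * m + 1 \<longrightarrow>
        card W = card S + m - 1 \<longrightarrow> \<not> (\<forall>F\<in>set Fs. \<forall>i\<in>S. F ! i \<in> W)"
    and Fs: "set Fs \<subseteq> Lst (7 * m) {..<7 * m} {} {..<7 * m}"
    and S: "S \<subseteq> {..<7 * m}" and J: "J \<subseteq> {..<7 * m}" and mS: "m \<le> card S" and mJ: "m \<le> card J"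
    and sum: "6 * m + 1 \<le> card S + card J"
    and avoid: "\<forall>F\<in>set Fs. \<forall>i\<in>S. F ! i \<notin> J"
  shows False
proof -
  define t0 where "t0 = min (card J) (5 * m + 1)"
  define s0 where "s0 = 6 * m + 1 - t0"
  have t0J: "t0 \<le> card J" and s0S: "s0 \<le> card S" and ms0: "m \<le> s0" and s05: "s0 \<le> 5 * m + 1"
    using sum mJ mS by (auto simp: t0_def s0_def min_def)
  obtain S0 where S0: "S0 \<subseteq> S" "card S0 = s0" by (meson obtain_subset_with_card_n s0S)
  obtain J0 where J0: "J0 \<subseteq> J" "card J0 = t0" "finite J0" by (meson obtain_subset_with_card_n t0J)
  define W where "W = {..<7 * m} - J0"
  have cW: "card W = s0 + m - 1"
  proof -
    have "card W = 7 * m - t0" using J0 J by (simp add: W_def card_Diff_subset)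
    also have "\<dots> = s0 + m - 1" using ms0 s05 by (simp add: s0_def t0_def min_def)
    finally show ?thesis .
  qed
  have "\<forall>F\<in>set Fs. \<forall>i\<in>S0. F ! i \<in> W"
  proof (intro ballI)
    fix F i assume F: "F \<in> set Fs" and i: "i \<in> S0"
    then have "F \<in> Lst (7 * m) {..<7 * m} {} {..<7 * m}" using Fs by auto
    then have "i < length F" "set F \<subseteq> {..<7 * m}" using i S0 S by (auto simp: Lst_def)
    then have "F ! i \<in> {..<7 * m}" using nth_mem by blast
    moreover have "F ! i \<notin> J0" using avoid F i S0 J0 by blast
    ultimately show "F ! i \<in> W" by (simp add: W_def)
  qed
  moreover have "S0 \<subseteq> {..<7 * m}" "W \<subseteq> {..<7 * m}" using S0 S by (auto simp: W_def)
  moreover have "m \<le> card S0" "card S0 \<le> 5 * m + 1" "card W = card S0 + m - 1" using ms0 s05 S0(2) cW by auto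
  ultimately show False using good by blast
qed



lemma card_nth_preimage:
  assumes "distinct g"
  shows "card {i. i < length g \<and> g ! i \<in> T} \<le> card T \<or> infinite T"
proof (cases "finite T")
  case True
  have "inj_on (\<lambda>i. g ! i) {i. i < length g \<and> g ! i \<in> T}"
    using assms by (auto simp: inj_on_def nth_eq_iff_index_eq)
  then have "card {i. i < length g \<and> g ! i \<in> T} = card ((\<lambda>i. g ! i) ` {i. i < length g \<and> g ! i \<in> T})"
    by (simp add: card_image)
  also have "\<dots> \<le> card T" by (rule card_mono[OF True]) auto
  finally show ?thesis by simp
qed simp

lemma fiber2:
  fixes M :: nat
  assumes d: "distinct g" and s: "set g \<subseteq> {..<2 * M}"
  shows "card {i. i < length g \<and> c + (g ! i) mod M = u} \<le> 2"
proof -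
  have sub: "{i. i < length g \<and> c + (g ! i) mod M = u} \<subseteq> {i. i < length g \<and> g ! i \<in> {u - c, u - c + M}}"
  proof
    fix i assume i: "i \<in> {i. i < length g \<and> c + (g ! i) mod M = u}"
    then have il: "i < length g" and eq: "(g ! i) mod M = u - c" by auto
    have "g ! i < 2 * M" using s il nth_mem by blast
    then have "g ! i div M < 2" by (rule less_mult_imp_div_less)
    then have "g ! i div M = 0 \<or> g ! i div M = 1" by linarith
    moreover have "g ! i = g ! i div M * M + (u - c)" using eq div_mult_mod_eq[of "g ! i" M] by simp
    ultimately have "g ! i \<in> {u - c, u - c + M}" by auto
    then show "i \<in> {i. i < length g \<and> g ! i \<in> {u - c, u - c + M}}" using il by simp
  qed
  have "card {i. i < length g \<and> c + (g ! i) mod M = u} \<le> card {i. i < length g \<and> g ! i \<in> {u - c, u - c + M}}"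
    by (rule card_mono[OF _ sub]) simp
  also have "\<dots> \<le> card {u - c, u - c + M}" using card_nth_preimage[OF d, of "{u - c, u - c + M}"] by simp
  also have "\<dots> \<le> 2" by (simp add: card_insert_if)
  finally show ?thesis .
qed

lemma card_UN_bound:
  assumes "finite I" "\<And>i. i \<in> I \<Longrightarrow> card (X i) \<le> c"
  shows "card (\<Union>i\<in>I. X i) \<le> card I * c"
proof -
  have "card (\<Union>i\<in>I. X i) \<le> (\<Sum>i\<in>I. card (X i))" using assms(1) by (rule card_UN_le)
  also have "\<dots> \<le> (\<Sum>i\<in>I. c)" by (rule sum_mono) (use assms in auto)
  finally show ?thesis by simp
qed

lemma Lst_props:
  assumes "F \<in> Lst u V {} V"
  shows "length F = u" "distinct F" "set F \<subseteq> V" "\<And>i. i < u \<Longrightarrow> F ! i \<in> V"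
  using assms by (auto simp: Lst_def)


lemma card_Un3: "card (X \<union> Y \<union> Z) \<le> card X + card Y + card Z"
proof -
  have "card (X \<union> Y \<union> Z) \<le> card (X \<union> Y) + card Z" by (rule card_Un_le)
  moreover have "card (X \<union> Y) \<le> card X + card Y" by (rule card_Un_le)
  ultimately show ?thesis by linarith
qed

lemma card_img_list: "card (h ` set xs) \<le> length xs"
  using card_image_le[OF finite_set, of h xs] card_length[of xs] by linarith

lemma construction:
  fixes m :: nat
  assumes m: "10000 \<le> m"
  shows "\<exists>(A::nat set) B E A' B'.
           bip_graph A B E \<and> bip_regular 256 A B E \<and>
           card A = 7 * m \<and> card B = 7 * m \<and>
           A' \<subseteq> A \<and> B' \<subseteq> B \<and> card A' = 2 * m \<and> card B' = 2 * m \<and>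
           (\<forall>X Y. X \<subseteq> A' \<longrightarrow> Y \<subseteq> B' \<longrightarrow> card X = card Y \<longrightarrow> card X \<le> m \<longrightarrow>
              bip_has_perfect_matching (A - X) (B - Y) E)"
proof -
  have m1: "1 \<le> m" using m by simp
  define n where "n = 7 * m"
  obtain P where P: "length P = 80" "set P \<subseteq> Lst (7 * m) {..<7 * m} {} {..<7 * m}"
    and Pgood: "\<forall>S W. S \<subseteq> {..<7 * m} \<longrightarrow> W \<subseteq> {..<7 * m} \<longrightarrow> m \<le> card S \<longrightarrow> card S \<le> 5 * m + 1 \<longrightarrow>
        card W = card S + m - 1 \<longrightarrow> \<not> (\<forall>F\<in>set P. \<forall>i\<in>S. F ! i \<in> W)"
    using fam2[OF m1] by blast
  obtain F where F: "length F = 8" "set F \<subseteq> Lst (7 * m) {..<10 * m} {} {..<10 * m}"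
    and Fgood: "\<forall>S W. S \<subseteq> {..<7 * m} \<longrightarrow> W \<subseteq> {..<10 * m} \<longrightarrow> 1 \<le> card S \<longrightarrow> card S \<le> m \<longrightarrow>
        card W = 2 * card S \<longrightarrow> \<not> (\<forall>F\<in>set F. \<forall>i\<in>S. F ! i \<in> W)"
    using fam1[OF m1] by blast
  obtain G where G: "length G = 8" "set G \<subseteq> Lst (7 * m) {..<10 * m} {} {..<10 * m}"
    and Ggood: "\<forall>S W. S \<subseteq> {..<7 * m} \<longrightarrow> W \<subseteq> {..<10 * m} \<longrightarrow> 1 \<le> card S \<longrightarrow> card S \<le> m \<longrightarrow>
        card W = 2 * card S \<longrightarrow> \<not> (\<forall>F\<in>set G. \<forall>i\<in>S. F ! i \<in> W)"
    using fam1[OF m1] by blast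
  have Pp: "length p = n" "distinct p" "set p \<subseteq> {..<n}" "\<And>i. i < n \<Longrightarrow> p ! i < n" if "p \<in> set P" for p
    using Lst_props[of p "7 * m" "{..<7 * m}"] P(2) that by (auto simp: n_def)
  have Fp: "length f = n" "distinct f" "set f \<subseteq> {..<2 * (5 * m)}" if "f \<in> set F" for f
    using Lst_props[of f "7 * m" "{..<10 * m}"] F(2) that by (auto simp: n_def)
  have Gp: "length g = n" "distinct g" "set g \<subseteq> {..<2 * (5 * m)}" if "g \<in> set G" for g
    using Lst_props[of g "7 * m" "{..<10 * m}"] G(2) that by (auto simp: n_def)
  define A where "A = {..<n}"
  define B where "B = {n..<2 * n}"
  define A' where "A' = {..<2 * m}"
  define B' where "B' = {n..<n + 2 * m}"
  define E1 where "E1 = {(i, n + p ! i) | i p. i < n \<and> p \<in> set P}"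
  define E2 where "E2 = {(i, n + 2 * m + (f ! i) mod (5 * m)) | i f. i < n \<and> f \<in> set F}"
  define E3 where "E3 = {(2 * m + (g ! i) mod (5 * m), n + i) | i g. i < n \<and> g \<in> set G}"
  define E0 where "E0 = E1 \<union> E2 \<union> E3"
  have mod5: "x mod (5 * m) < 5 * m" for x using m1 by simp
  have finA: "finite A" and finB: "finite B" by (simp_all add: A_def B_def)
  have cA: "card A = n" and cB: "card B = n" by (simp_all add: A_def B_def n_def)
  have E0AB: "E0 \<subseteq> A \<times> B"
  proof -
    have "E1 \<subseteq> A \<times> B" using Pp by (auto simp: E1_def A_def B_def)
    moreover have "E2 \<subseteq> A \<times> B" using mod5 by (auto simp: E2_def A_def B_def n_def)
    moreover have "E3 \<subseteq> A \<times> B" using mod5 by (auto simp: E3_def A_def B_def n_def)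
    ultimately show ?thesis by (auto simp: E0_def)
  qed
  have degA0: "dA E0 u < 256" if u: "u \<in> A" for u
  proof -
    have sub: "{y. (u, y) \<in> E0} \<subseteq> (\<lambda>p. n + p ! u) ` set P \<union> (\<lambda>f. n + 2 * m + (f ! u) mod (5 * m)) ` set F \<union>
        (\<Union>g\<in>set G. (\<lambda>i. n + i) ` {i. i < length g \<and> 2 * m + (g ! i) mod (5 * m) = u})"
      using Gp by (auto simp: E0_def E1_def E2_def E3_def)
    have c1: "card ((\<lambda>p. n + p ! u) ` set P) \<le> 80" using card_img_list[of _ P] P(1) by metis
    have c2: "card ((\<lambda>f. n + 2 * m + (f ! u) mod (5 * m)) ` set F) \<le> 8" using card_img_list[of _ F] F(1) by metis
    have c3: "card (\<Union>g\<in>set G. (\<lambda>i. n + i) ` {i. i < length g \<and> 2 * m + (g ! i) mod (5 * m) = u}) \<le> 8 * 2"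
    proof -
      have "card (\<Union>g\<in>set G. (\<lambda>i. n + i) ` {i. i < length g \<and> 2 * m + (g ! i) mod (5 * m) = u}) \<le> card (set G) * 2"
      proof (rule card_UN_bound)
        fix g assume g: "g \<in> set G"
        have "card ((\<lambda>i. n + i) ` {i. i < length g \<and> 2 * m + (g ! i) mod (5 * m) = u}) = card {i. i < length g \<and> 2 * m + (g ! i) mod (5 * m) = u}"
          by (simp add: card_image)
        also have "\<dots> \<le> 2" using fiber2[OF Gp(2)[OF g] Gp(3)[OF g]] .
        finally show "card ((\<lambda>i. n + i) ` {i. i < length g \<and> 2 * m + (g ! i) mod (5 * m) = u}) \<le> 2" .
      qed simp
      also have "\<dots> \<le> 8 * 2" using card_length[of G] G(1) by simp
      finally show ?thesis .
    qed
    have "dA E0 u \<le> card ((\<lambda>p. n + p ! u) ` set P \<union> (\<lambda>f. n + 2 * m + (f ! u) mod (5 * m)) ` set F \<union>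
        (\<Union>g\<in>set G. (\<lambda>i. n + i) ` {i. i < length g \<and> 2 * m + (g ! i) mod (5 * m) = u}))"
      unfolding dA_def by (rule card_mono[OF _ sub]) simp
    also have "\<dots> \<le> 80 + 8 + 8 * 2" using c1 c2 c3 card_Un3 by (meson add_le_mono le_trans)
    finally show ?thesis by simp
  qed
  have degB0: "dB E0 w < 256" if w: "w \<in> B" for w
  proof -
    have sub: "{x. (x, w) \<in> E0} \<subseteq> (\<Union>p\<in>set P. {i. i < length p \<and> p ! i \<in> {w - n}}) \<union>
        (\<Union>f\<in>set F. {i. i < length f \<and> 2 * m + (f ! i) mod (5 * m) = w - n}) \<union>
        (\<lambda>g. 2 * m + (g ! (w - n)) mod (5 * m)) ` set G"
    proof
      fix x assume "x \<in> {x. (x, w) \<in> E0}"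
      then have "(x, w) \<in> E1 \<or> (x, w) \<in> E2 \<or> (x, w) \<in> E3" by (simp add: E0_def)
      then show "x \<in> (\<Union>p\<in>set P. {i. i < length p \<and> p ! i \<in> {w - n}}) \<union>
        (\<Union>f\<in>set F. {i. i < length f \<and> 2 * m + (f ! i) mod (5 * m) = w - n}) \<union>
        (\<lambda>g. 2 * m + (g ! (w - n)) mod (5 * m)) ` set G"
      proof (elim disjE)
        assume "(x, w) \<in> E1"
        then obtain p where "p \<in> set P" "x < n" "w = n + p ! x" by (auto simp: E1_def)
        then show ?thesis using Pp(1) by auto
      next
        assume "(x, w) \<in> E2"
        then obtain f where "f \<in> set F" "x < n" "w = n + 2 * m + (f ! x) mod (5 * m)" by (auto simp: E2_def)
        then show ?thesis using Fp(1) by auto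
      next
        assume "(x, w) \<in> E3"
        then obtain g i where "g \<in> set G" "x = 2 * m + (g ! i) mod (5 * m)" "w = n + i" by (auto simp: E3_def)
        then show ?thesis by auto
      qed
    qed
    have c1: "card (\<Union>p\<in>set P. {i. i < length p \<and> p ! i \<in> {w - n}}) \<le> 80 * 1"
    proof -
      have "card (\<Union>p\<in>set P. {i. i < length p \<and> p ! i \<in> {w - n}}) \<le> card (set P) * 1"
      proof (rule card_UN_bound)
        fix p assume "p \<in> set P"
        then show "card {i. i < length p \<and> p ! i \<in> {w - n}} \<le> 1"
          using card_nth_preimage[OF Pp(2), of p "{w - n}"] by simp
      qed simp
      also have "\<dots> \<le> 80 * 1" using card_length[of P] P(1) by simp
      finally show ?thesis .
    qed
    have c2: "card (\<Union>f\<in>set F. {i. i < length f \<and> 2 * m + (f ! i) mod (5 * m) = w - n}) \<le> 8 * 2"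
    proof -
      have "card (\<Union>f\<in>set F. {i. i < length f \<and> 2 * m + (f ! i) mod (5 * m) = w - n}) \<le> card (set F) * 2"
      proof (rule card_UN_bound)
        fix f assume f: "f \<in> set F"
        show "card {i. i < length f \<and> 2 * m + (f ! i) mod (5 * m) = w - n} \<le> 2"
          using fiber2[OF Fp(2)[OF f] Fp(3)[OF f]] .
      qed simp
      also have "\<dots> \<le> 8 * 2" using card_length[of F] F(1) by simp
      finally show ?thesis .
    qed
    have c3: "card ((\<lambda>g. 2 * m + (g ! (w - n)) mod (5 * m)) ` set G) \<le> 8"
      using card_img_list[of _ G] G(1) by metis
    have "dB E0 w \<le> card ((\<Union>p\<in>set P. {i. i < length p \<and> p ! i \<in> {w - n}}) \<union>
        (\<Union>f\<in>set F. {i. i < length f \<and> 2 * m + (f ! i) mod (5 * m) = w - n}) \<union>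
        (\<lambda>g. 2 * m + (g ! (w - n)) mod (5 * m)) ` set G)"
      unfolding dB_def by (rule card_mono[OF _ sub]) simp
    also have "\<dots> \<le> 80 * 1 + 8 * 2 + 8" using c1 c2 c3 card_Un3 by (meson add_le_mono le_trans)
    finally show ?thesis by simp
  qed
  have big: "256 * 256 \<le> n" using m by (simp add: n_def)
  obtain E where E0E: "E0 \<subseteq> E" and EAB: "E \<subseteq> A \<times> B" and dAE: "\<forall>u\<in>A. dA E u = 256" and dBE: "\<forall>w\<in>B. dB E w = 256"
  proof -
    have "\<forall>u\<in>A. dA E0 u < 256" using degA0 by blast
    moreover have "\<forall>w\<in>B. dB E0 w < 256" using degB0 by blast
    ultimately show ?thesis using completion[OF finA finB cA cB E0AB _ _ big] that by blast
  qed
  have EAB': "\<And>a b. (a, b) \<in> E \<Longrightarrow> a \<in> A \<and> b \<in> B" using EAB by auto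
  have E1E: "(i, n + p ! i) \<in> E" if "i < n" "p \<in> set P" for i p
    using that E0E by (auto simp: E0_def E1_def)
  have E2E: "(i, n + 2 * m + (f ! i) mod (5 * m)) \<in> E" if "i < n" "f \<in> set F" for i f
    using that E0E by (auto simp: E0_def E2_def)
  have E3E: "(2 * m + (g ! i) mod (5 * m), n + i) \<in> E" if "i < n" "g \<in> set G" for i g
  proof -
    have "(2 * m + (g ! i) mod (5 * m), n + i) \<in> E3" unfolding E3_def using that by blast
    then show ?thesis using E0E by (auto simp: E0_def)
  qed
  have match: "bip_has_perfect_matching (A - X) (B - Y) E"
    if X: "X \<subseteq> A'" and Y: "Y \<subseteq> B'" and XY: "card X = card Y" and Xm: "card X \<le> m" for X Y
  proof -
    define k where "k = card X"
    have XA: "X \<subseteq> A" and YB: "Y \<subseteq> B" using X Y by (auto simp: A'_def B'_def A_def B_def n_def)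
    have finX: "finite X" and finY: "finite Y" using XA YB finA finB finite_subset by blast+
    have cAX: "card (A - X) = n - k" using XA finX cA by (simp add: card_Diff_subset k_def)
    have cBY: "card (B - Y) = n - k" using YB finY cB XY by (simp add: card_Diff_subset k_def)
    have km: "k \<le> m" using Xm by (simp add: k_def)
    define R where "R a = {b \<in> B - Y. (a, b) \<in> E}" for a
    have finR: "\<forall>a\<in>A - X. finite (R a)" using finB by (simp add: R_def)
    have hallc: "\<forall>S\<subseteq>A - X. card S \<le> card (\<Union>(R ` S))"
    proof (intro allI impI)
      fix S assume SAX: "S \<subseteq> A - X"
      define NS where "NS = \<Union>(R ` S)"
      have NSB: "NS \<subseteq> B - Y" by (auto simp: NS_def R_def)
      have finNS: "finite NS" using NSB finB finite_subset by blast
      have finS: "finite S" using SAX finA finite_subset by blast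
      have Sn: "S \<subseteq> {..<7 * m}" using SAX by (auto simp: A_def n_def)
      have cS: "card S \<le> n - k" using card_mono[OF _ SAX] cAX finA by simp
      show "card S \<le> card (\<Union>(R ` S))"
      proof (rule ccontr)
        assume "\<not> card S \<le> card (\<Union>(R ` S))"
        then have lt: "card NS < card S" by (simp add: NS_def)
        define T where "T = (B - Y) - NS"
        have TBY: "T \<subseteq> B - Y" by (auto simp: T_def)
        have finT: "finite T" using TBY finB finite_subset by blast
        have cT: "card T = (n - k) - card NS" using cBY NSB finNS by (simp add: T_def card_Diff_subset)
        have inNS: "b \<in> NS" if "a \<in> S" "b \<in> B - Y" "(a, b) \<in> E" for a b
          using that by (auto simp: NS_def R_def)
        have noedge: "(a, b) \<notin> E" if "a \<in> S" "b \<in> T" for a b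
          using inNS that by (auto simp: T_def)
        define J where "J = (\<lambda>b. b - n) ` T"
        have injT: "inj_on (\<lambda>b. b - n) T"
        proof (rule inj_onI)
          fix x y assume "x \<in> T" "y \<in> T" "x - n = y - n"
          moreover have "n \<le> x" "n \<le> y" using \<open>x \<in> T\<close> \<open>y \<in> T\<close> TBY by (auto simp: B_def)
          ultimately show "x = y" by linarith
        qed
        have cJ: "card J = card T" using injT by (simp add: J_def card_image)
        have Jn: "J \<subseteq> {..<7 * m}"
        proof
          fix j assume "j \<in> J"
          then obtain b where "b \<in> T" "j = b - n" by (auto simp: J_def)
          moreover have "b < 2 * n" "n \<le> b" using \<open>b \<in> T\<close> TBY by (auto simp: B_def)
          ultimately show "j \<in> {..<7 * m}" by (simp add: n_def)
        qed
        have TJ: "b \<in> T \<longleftrightarrow> b - n \<in> J \<and> n \<le> b" for b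
        proof
          assume "b \<in> T" then show "b - n \<in> J \<and> n \<le> b" using TBY by (auto simp: J_def B_def)
        next
          assume "b - n \<in> J \<and> n \<le> b"
          then obtain b' where "b' \<in> T" "b - n = b' - n" "n \<le> b" by (auto simp: J_def)
          moreover have "n \<le> b'" using \<open>b' \<in> T\<close> TBY by (auto simp: B_def)
          ultimately show "b \<in> T" by (metis le_add_diff_inverse)
        qed
        consider (small) "card S < m" | (smallT) "card T < m" | (large) "m \<le> card S" "m \<le> card T" by linarith
        then show False
        proof cases
          case small
          have S1: "1 \<le> card S" using lt by simp
          define U where "U = (\<Union>f\<in>set F. (\<lambda>i. f ! i) ` S)"
          have exp: "2 * card S \<le> card U" unfolding U_def
            by (rule expand_fam[OF F(2) _ Fgood Sn S1]) (use small in simp_all)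
          have U10: "U \<subseteq> {..<2 * (5 * m)}"
          proof
            fix v assume "v \<in> U"
            then obtain f i where "f \<in> set F" "i \<in> S" "v = f ! i" by (auto simp: U_def)
            moreover have "i < length f" using \<open>i \<in> S\<close> Sn Fp(1)[OF \<open>f \<in> set F\<close>] by (auto simp: n_def)
            ultimately show "v \<in> {..<2 * (5 * m)}" using Fp(3) nth_mem by blast
          qed
          have h1: "card U \<le> 2 * card ((\<lambda>v. v mod (5 * m)) ` U)" by (rule half_mod[OF U10])
          have sub: "(\<lambda>r. n + 2 * m + r) ` ((\<lambda>v. v mod (5 * m)) ` U) \<subseteq> NS"
          proof
            fix b assume "b \<in> (\<lambda>r. n + 2 * m + r) ` ((\<lambda>v. v mod (5 * m)) ` U)"
            then obtain f i where f: "f \<in> set F" and i: "i \<in> S" and b: "b = n + 2 * m + (f ! i) mod (5 * m)"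
              by (auto simp: U_def)
            have iA: "i < n" using i Sn by (auto simp: n_def)
            have e: "(i, b) \<in> E" using E2E[OF iA f] b by simp
            have "b \<in> B" using EAB' e by blast
            moreover have "b \<notin> Y" using Y b by (auto simp: B'_def)
            ultimately show "b \<in> NS" using inNS[OF i _ e] by blast
          qed
          have "card ((\<lambda>v. v mod (5 * m)) ` U) = card ((\<lambda>r. n + 2 * m + r) ` ((\<lambda>v. v mod (5 * m)) ` U))"
            by (simp add: card_image)
          also have "\<dots> \<le> card NS" by (rule card_mono[OF finNS sub])
          finally show False using exp h1 lt by linarith
        next
          case smallT
          have key: "card T \<le> card ((A - X) - S)"
          proof (cases "T = {}")
            case True then show ?thesis by simp
          next
            case False
            have J1: "1 \<le> card J" using False finT cJ by (simp add: Suc_le_eq card_gt_0_iff)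
            define U where "U = (\<Union>g\<in>set G. (\<lambda>i. g ! i) ` J)"
            have exp: "2 * card J \<le> card U" unfolding U_def
              by (rule expand_fam[OF G(2) _ Ggood Jn J1]) (use smallT cJ in simp_all)
            have U10: "U \<subseteq> {..<2 * (5 * m)}"
            proof
              fix v assume "v \<in> U"
              then obtain g i where "g \<in> set G" "i \<in> J" "v = g ! i" by (auto simp: U_def)
              moreover have "i < length g" using \<open>i \<in> J\<close> Jn Gp(1)[OF \<open>g \<in> set G\<close>] by (auto simp: n_def)
              ultimately show "v \<in> {..<2 * (5 * m)}" using Gp(3) nth_mem by blast
            qed
            have h1: "card U \<le> 2 * card ((\<lambda>v. v mod (5 * m)) ` U)" by (rule half_mod[OF U10])
            have sub: "(\<lambda>r. 2 * m + r) ` ((\<lambda>v. v mod (5 * m)) ` U) \<subseteq> (A - X) - S"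
            proof
              fix a assume "a \<in> (\<lambda>r. 2 * m + r) ` ((\<lambda>v. v mod (5 * m)) ` U)"
              then obtain g j where g: "g \<in> set G" and j: "j \<in> J" and a: "a = 2 * m + (g ! j) mod (5 * m)"
                by (auto simp: U_def)
              have jn: "j < n" using j Jn by (auto simp: n_def)
              have bT: "n + j \<in> T" using TJ[of "n + j"] j by simp
              have e: "(a, n + j) \<in> E" using E3E[OF jn g] a by simp
              have "a \<in> A" using EAB' e by blast
              moreover have "a \<notin> X" using X a by (auto simp: A'_def)
              moreover have "a \<notin> S" using noedge[OF _ bT] e by blast
              ultimately show "a \<in> (A - X) - S" by blast
            qed
            have finAXS: "finite ((A - X) - S)" using finA by simp
            have "card T = card J" using cJ by simp
            also have "\<dots> \<le> card ((\<lambda>v. v mod (5 * m)) ` U)" using exp h1 by linarith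
            also have "\<dots> = card ((\<lambda>r. 2 * m + r) ` ((\<lambda>v. v mod (5 * m)) ` U))" by (simp add: card_image)
            also have "\<dots> \<le> card ((A - X) - S)" by (rule card_mono[OF finAXS sub])
            finally show ?thesis .
          qed
          have "card ((A - X) - S) = (n - k) - card S" using SAX finS cAX by (simp add: card_Diff_subset)
          then show False using key cT lt cS by linarith
        next
          case large
          have avoid: "\<forall>p\<in>set P. \<forall>i\<in>S. p ! i \<notin> J"
          proof (intro ballI notI)
            fix p i assume p: "p \<in> set P" and i: "i \<in> S" and pJ: "p ! i \<in> J"
            have iA: "i < n" using i Sn by (auto simp: n_def)
            have "n + p ! i \<in> T" using TJ[of "n + p ! i"] pJ by simp
            moreover have "(i, n + p ! i) \<in> E" by (rule E1E[OF iA p])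
            ultimately show False using noedge[OF i] by blast
          qed
          have "6 * m + 1 \<le> card S + card J" using cT cJ lt km cS by (simp add: n_def)
          then show False
            using P2_cons[OF Pgood P(2) Sn Jn large(1)] large(2) cJ avoid by simp
        qed
      qed
    qed
    obtain f where f: "inj_on f (A - X)" "\<forall>a\<in>A - X. f a \<in> R a"
      using hall[of "A - X" R] finA finR hallc by auto
    have fimg: "f ` (A - X) = B - Y"
    proof (rule card_seteq)
      show "finite (B - Y)" using finB by simp
      show "f ` (A - X) \<subseteq> B - Y" using f(2) by (auto simp: R_def)
      show "card (B - Y) \<le> card (f ` (A - X))" using card_image[OF f(1)] cAX cBY by simp
    qed
    define M where "M = (\<lambda>a. (a, f a)) ` (A - X)"
    show ?thesis
      unfolding bip_has_perfect_matching_def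
    proof (intro exI conjI ballI)
      show "M \<subseteq> E \<inter> ((A - X) \<times> (B - Y))" using f(2) by (auto simp: M_def R_def)
      fix a assume a: "a \<in> A - X"
      show "\<exists>!b. (a, b) \<in> M" using a by (auto simp: M_def)
    next
      fix b assume b: "b \<in> B - Y"
      then obtain a where a: "a \<in> A - X" "f a = b" using fimg by (metis imageE)
      show "\<exists>!a. (a, b) \<in> M"
      proof (rule ex1I[of _ a])
        show "(a, b) \<in> M" using a by (auto simp: M_def)
        fix a' assume "(a', b) \<in> M"
        then have "a' \<in> A - X" "f a' = b" by (auto simp: M_def)
        then show "a' = a" using a f(1) by (auto simp: inj_on_def)
      qed
    qed
  qed
  show ?thesis
  proof (intro exI conjI allI impI)
    show "bip_graph A B E" using EAB finA finB by (auto simp: bip_graph_def A_def B_def)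
    have "card {b \<in> B. (a, b) \<in> E} = 256" if "a \<in> A" for a
    proof -
      have "{b \<in> B. (a, b) \<in> E} = {y. (a, y) \<in> E}" using EAB by auto
      then show ?thesis using dAE that by (simp add: dA_def)
    qed
    moreover have "card {a \<in> A. (a, b) \<in> E} = 256" if "b \<in> B" for b
    proof -
      have "{a \<in> A. (a, b) \<in> E} = {x. (x, b) \<in> E}" using EAB by auto
      then show ?thesis using dBE that by (simp add: dB_def)
    qed
    ultimately show "bip_regular 256 A B E" by (simp add: bip_regular_def)
    show "card A = 7 * m" "card B = 7 * m" using cA cB by (simp_all add: n_def)
    show "A' \<subseteq> A" "B' \<subseteq> B" by (auto simp: A'_def B'_def A_def B_def n_def)
    show "card A' = 2 * m" "card B' = 2 * m" by (simp_all add: A'_def B'_def)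
    fix X Y assume "X \<subseteq> A'" "Y \<subseteq> B'" "card X = card Y" "card X \<le> m"
    then show "bip_has_perfect_matching (A - X) (B - Y) E" by (rule match)
  qed
qed

theorem lemma5:
  shows "\<exists>m0::nat. \<forall>m\<ge>m0. \<exists>(A::nat set) B E A' B'.
           bip_graph A B E \<and> bip_regular 256 A B E \<and>
           card A = 7 * m \<and> card B = 7 * m \<and>
           A' \<subseteq> A \<and> B' \<subseteq> B \<and> card A' = 2 * m \<and> card B' = 2 * m \<and>
           (\<forall>X Y. X \<subseteq> A' \<longrightarrow> Y \<subseteq> B' \<longrightarrow> card X = card Y \<longrightarrow> card X \<le> m \<longrightarrow>
              bip_has_perfect_matching (A - X) (B - Y) E)"
  using construction by blast

end
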